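(* Let $H=H_0+\sum_{i=1}^{N_c}J_iV_i$ on $N_q$ qubits with $H_0=-\sum_{n=1}^{N_q}h_nZ_n$, all $h_n>0$, and each $V_i\in\{I,X,Y,Z\}^{\otimes N_q}$. Let $|E_0\rangle=\sum_{\vec{k}\in\mathbb{N}^{N_c}}\vec{J}^{\cdot\vec{k}}C_{\vec{k}}\vec{V}^{\cdot\vec{k}}|\vec{0}\rangle$ (with $C_{\vec{k}}\in\mathbb{R}$) be the Taylor expansion in $\vec{J}$ near $0$ of the normalized ground state of $H$ with phase fixed by $\langle\vec{0}|E_0\rangle>0$. If $\vec{k}=\vec{k}_A+\vec{k}_B$ with $\vec{k}_A,\vec{k}_B\in\mathbb{N}^{N_c}$ whose supports share no qubit, then $C_{\vec{k}}=C_{\vec{k}_A}C_{\vec{k}_B}$.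
   Context: $|\vec{0}\rangle$ is the all-$|0\rangle$ computational basis state. $\mathbb{N}$ includes $0$. For a vector of numbers $\vec{a}$, $\vec{a}^{\cdot\vec{k}}=\prod_ia_i^{k_i}$; for operators, $\vec{V}^{\cdot\vec{k}}=V_{N_c}^{k_{N_c}}\cdots V_1^{k_1}$. The couplings activated in $\vec{k}$ are the $V_i$ with $k_i\neq0$; the support of $\vec{k}$ is the set of qubits on which at least one activated coupling acts non-trivially (i.e. as $X$, $Y$ or $Z$). *)

theory Defs
  imports "HOL-Analysis.Analysis"
begin

text \<open>Qubits are indexed 0..Nq-1, couplings 0..Nc-1 (the paper uses 1-based
indices). A computational basis state is the set x of qubits that are in state |1>;
states of the Nq-qubit register are functions  nat set => complex  supported on subsets
of {..<Nq}. A Pauli string is a function  nat => pauli  (identity on qubits >= Nq).\<close>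

datatype pauli = PI | PX | PY | PZ

type_synonym state = "nat set \<Rightarrow> complex"

definition flips :: "(nat \<Rightarrow> pauli) \<Rightarrow> nat set" where
  "flips P = {n. P n = PX \<or> P n = PY}"

text \<open>Single qubit phase: P|b> = phase * |b'>, with X|b>=|1-b>, Y|b> = i(-1)^b|1-b>,
Z|b> = (-1)^b|b>.\<close>
fun pauli_phase :: "pauli \<Rightarrow> bool \<Rightarrow> complex" where
  "pauli_phase PI b = 1"
| "pauli_phase PX b = 1"
| "pauli_phase PY b = (if b then - \<i> else \<i>)"
| "pauli_phase PZ b = (if b then -1 else 1)"

definition string_phase :: "(nat \<Rightarrow> pauli) \<Rightarrow> nat set \<Rightarrow> complex" where
  "string_phase P x = (\<Prod>n\<in>{n. P n \<noteq> PI}. pauli_phase (P n) (n \<in> x))"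

text \<open>Action of a Pauli string on a state: P|x> = phase(P,x) |x xor flips P>.\<close>
definition apply_pauli :: "(nat \<Rightarrow> pauli) \<Rightarrow> state \<Rightarrow> state" where
  "apply_pauli P v = (\<lambda>y. string_phase P (y \<union> flips P - (y \<inter> flips P)) *
                          v (y \<union> flips P - (y \<inter> flips P)))"

definition is_pauli_string :: "nat \<Rightarrow> (nat \<Rightarrow> pauli) \<Rightarrow> bool" where
  "is_pauli_string Nq P \<longleftrightarrow> (\<forall>n\<ge>Nq. P n = PI)"

definition Zop :: "nat \<Rightarrow> nat \<Rightarrow> pauli" where
  "Zop n = (\<lambda>m. if m = n then PZ else PI)"

definition hamiltonian ::
  "nat \<Rightarrow> (nat \<Rightarrow> real) \<Rightarrow> nat \<Rightarrow> (nat \<Rightarrow> nat \<Rightarrow> pauli) \<Rightarrow> (nat \<Rightarrow> real) \<Rightarrow> state \<Rightarrow> state" where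
  "hamiltonian Nq h Nc V J v =
     (\<lambda>y. - (\<Sum>n<Nq. complex_of_real (h n) * apply_pauli (Zop n) v y)
          + (\<Sum>i<Nc. complex_of_real (J i) * apply_pauli (V i) v y))"

definition qstates :: "nat \<Rightarrow> state set" where
  "qstates Nq = {v. \<forall>x. \<not> x \<subseteq> {..<Nq} \<longrightarrow> v x = 0}"

definition sq_norm :: "nat \<Rightarrow> state \<Rightarrow> real" where
  "sq_norm Nq v = (\<Sum>x\<in>Pow {..<Nq}. (cmod (v x))\<^sup>2)"

definition is_eigenpair :: "nat \<Rightarrow> (state \<Rightarrow> state) \<Rightarrow> complex \<Rightarrow> state \<Rightarrow> bool" where
  "is_eigenpair Nq A lam v \<longleftrightarrow> v \<in> qstates Nq \<and> v \<noteq> (\<lambda>_. 0) \<and> A v = (\<lambda>x. lam * v x)"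

definition is_eigenvalue :: "nat \<Rightarrow> (state \<Rightarrow> state) \<Rightarrow> complex \<Rightarrow> bool" where
  "is_eigenvalue Nq A lam \<longleftrightarrow> (\<exists>v. is_eigenpair Nq A lam v)"

definition is_ground_state :: "nat \<Rightarrow> (state \<Rightarrow> state) \<Rightarrow> state \<Rightarrow> bool" where
  "is_ground_state Nq A v \<longleftrightarrow>
     (\<exists>e::real. is_eigenpair Nq A (complex_of_real e) v \<and>
        (\<forall>mu. is_eigenvalue Nq A mu \<longrightarrow> e \<le> Re mu))"

definition is_phased_ground_state :: "nat \<Rightarrow> (state \<Rightarrow> state) \<Rightarrow> state \<Rightarrow> bool" where
  "is_phased_ground_state Nq A v \<longleftrightarrow>
     is_ground_state Nq A v \<and> sq_norm Nq v = 1 \<and> Im (v {}) = 0 \<and> Re (v {}) > 0"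

definition ket0 :: state where
  "ket0 = (\<lambda>x. if x = {} then 1 else 0)"

definition multi_idx :: "nat \<Rightarrow> (nat \<Rightarrow> nat) set" where
  "multi_idx Nc = {k. \<forall>i\<ge>Nc. k i = 0}"

fun op_pow :: "(nat \<Rightarrow> nat \<Rightarrow> pauli) \<Rightarrow> (nat \<Rightarrow> nat) \<Rightarrow> nat \<Rightarrow> state \<Rightarrow> state" where
  "op_pow V k 0 v = v"
| "op_pow V k (Suc m) v = (apply_pauli (V m) ^^ k m) (op_pow V k m v)"

definition mono_pow :: "nat \<Rightarrow> (nat \<Rightarrow> real) \<Rightarrow> (nat \<Rightarrow> nat) \<Rightarrow> real" where
  "mono_pow Nc J k = (\<Prod>i<Nc. J i ^ k i)"

definition support :: "nat \<Rightarrow> (nat \<Rightarrow> nat \<Rightarrow> pauli) \<Rightarrow> (nat \<Rightarrow> nat) \<Rightarrow> nat set" where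
  "support Nc V k = {n. \<exists>i<Nc. k i \<noteq> 0 \<and> V i n \<noteq> PI}"

end

theory Submission
  imports Defs
begin

lemma powser_unique_real:
  fixes a :: "nat \<Rightarrow> real"
  assumes e: "e > 0" and S: "\<And>y. \<bar>y\<bar> < e \<Longrightarrow> (\<lambda>m. a m * y ^ m) sums 0"
  shows "a n = 0"
proof (induction n rule: less_induct)
  case (less n)
  have sm: "(\<lambda>m. a (m + n) * y ^ m) sums 0" if "y \<noteq> 0" "norm y < e" for y :: real
  proof -
    have s0: "(\<lambda>m. a m * y ^ m) sums 0" using S that by auto
    have "(\<lambda>m. a (m + n) * y ^ (m + n)) sums 0"
    proof -
      have "(\<lambda>m. a (m + n) * y ^ (m + n)) sums (0 - (\<Sum>i<n. a i * y ^ i))"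
        using sums_split_initial_segment[OF s0, of n] by simp
      moreover have "(\<Sum>i<n. a i * y ^ i) = 0" using less by simp
      ultimately show ?thesis by simp
    qed
    then have "(\<lambda>m. (a (m + n) * y ^ (m + n)) * (1 / y ^ n)) sums (0 * (1 / y ^ n))"
      by (rule sums_mult2)
    moreover have "(\<lambda>m. (a (m + n) * y ^ (m + n)) * (1 / y ^ n)) = (\<lambda>m. a (m + n) * y ^ m)"
      using that by (auto simp: power_add field_simps)
    ultimately show ?thesis by simp
  qed
  have "((\<lambda>_. 0::real) \<longlongrightarrow> a (0 + n)) (at (0::real))"
    using powser_limit_0_strong[of e "\<lambda>m. a (m + n)" "\<lambda>_. 0"] e sm by auto
  then show ?case by (simp add: tendsto_const_iff)
qed

lemma powser_unique_complex:
  fixes a :: "nat \<Rightarrow> complex"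
  assumes e: "e > 0" and S: "\<And>y::real. \<bar>y\<bar> < e \<Longrightarrow> ((\<lambda>m. complex_of_real (y ^ m) * a m) has_sum 0) UNIV"
  shows "a n = 0"
proof -
  have "Re (a n) = 0"
  proof (rule powser_unique_real[OF e])
    fix y :: real assume "\<bar>y\<bar> < e"
    from has_sum_Re[OF S[OF this]] have "((\<lambda>m. Re (a m) * y ^ m) has_sum 0) UNIV"
      by (simp add: mult.commute)
    then show "(\<lambda>m. Re (a m) * y ^ m) sums 0" by (rule has_sum_imp_sums)
  qed
  moreover have "Im (a n) = 0"
  proof (rule powser_unique_real[OF e])
    fix y :: real assume "\<bar>y\<bar> < e"
    from has_sum_Im[OF S[OF this]] have "((\<lambda>m. Im (a m) * y ^ m) has_sum 0) UNIV"
      by (simp add: mult.commute)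
    then show "(\<lambda>m. Im (a m) * y ^ m) sums 0" by (rule has_sum_imp_sums)
  qed
  ultimately show ?thesis by (simp add: complex_eq_iff)
qed

lemma mono_pow_upd: "mono_pow (Suc n) J (k(n:=m)) = mono_pow n J k * J n ^ m"
  unfolding mono_pow_def by (simp add: prod.lessThan_Suc)

lemma mono_pow_Jupd: "mono_pow n (J(n:=y)) k = mono_pow n J k"
  unfolding mono_pow_def by (intro prod.cong) auto

lemma multi_idx_0: "multi_idx 0 = {\<lambda>_. 0}"
  unfolding multi_idx_def by auto

lemma UL:
  fixes a :: "(nat \<Rightarrow> nat) \<Rightarrow> complex"
  assumes e: "e > 0"
    and H: "\<forall>J. (\<forall>i<n. \<bar>J i\<bar> < e) \<longrightarrow> ((\<lambda>k. complex_of_real (mono_pow n J k) * a k) has_sum 0) (multi_idx n)"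
    and k: "k \<in> multi_idx n"
  shows "a k = 0"
  using H k
proof (induction n arbitrary: a k)
  case 0
  have kk: "k = (\<lambda>_. 0)" using 0(2) multi_idx_0 by auto
  from 0(1)[rule_format, of "\<lambda>_. 0"] have "((\<lambda>k. complex_of_real (mono_pow 0 (\<lambda>_. 0) k) * a k) has_sum 0) {\<lambda>_. 0}"
    using e by (simp add: multi_idx_0)
  moreover have "((\<lambda>k. complex_of_real (mono_pow 0 (\<lambda>_. 0) k) * a k) has_sum a (\<lambda>_. 0)) {\<lambda>_. 0}"
    by (simp add: mono_pow_def has_sum_finite_iff)
  ultimately show ?case using kk has_sum_unique by blast
next
  case (Suc n)
  define T where "T = multi_idx n"
  have keyF: "((\<lambda>(m,k'). complex_of_real (mono_pow n J' k' * y ^ m) * a (k'(n:=m))) has_sum 0) (UNIV \<times> T)"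
    if J': "\<forall>i<n. \<bar>J' i\<bar> < e" and y: "\<bar>y\<bar> < e" for J' y
  proof -
    have box: "\<forall>i<Suc n. \<bar>(J'(n:=y)) i\<bar> < e" using J' y by (auto simp: less_Suc_eq)
    have hs: "((\<lambda>k. complex_of_real (mono_pow (Suc n) (J'(n:=y)) k) * a k) has_sum 0) (multi_idx (Suc n))"
      using Suc.prems(1) box by blast
    have eq: "((\<lambda>(m,k'). complex_of_real (mono_pow n J' k' * y ^ m) * a (k'(n:=m))) has_sum 0) (UNIV \<times> T)
      = ((\<lambda>k. complex_of_real (mono_pow (Suc n) (J'(n:=y)) k) * a k) has_sum 0) (multi_idx (Suc n))"
      apply (rule has_sum_reindex_bij_witness[where i="\<lambda>k. (k n, k(n:=0))" and j="\<lambda>(m,k'). k'(n:=m)"])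
      by (auto simp: T_def multi_idx_def fun_eq_iff mono_pow_upd mono_pow_Jupd)
    show ?thesis using eq hs by simp
  qed
  have inner: "((\<lambda>k'. complex_of_real (mono_pow n J' k') * a (k'(n:=m))) has_sum 0) T"
    if J': "\<forall>i<n. \<bar>J' i\<bar> < e" for J' m
  proof -
    define G where "G m = (\<Sum>\<^sub>\<infinity>k'\<in>T. complex_of_real (mono_pow n J' k') * a (k'(n:=m)))" for m
    have rew: "(\<lambda>k'. complex_of_real (mono_pow n J' k' * y ^ m) * a (k'(n:=m)))
        = (\<lambda>k'. complex_of_real (y ^ m) * (complex_of_real (mono_pow n J' k') * a (k'(n:=m))))" for y m
      by (auto simp: fun_eq_iff)
    have sumi: "(\<lambda>k'. complex_of_real (mono_pow n J' k' * y ^ m) * a (k'(n:=m))) summable_on T"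
      if y: "\<bar>y\<bar> < e" for y m
    proof -
      have "(\<lambda>(m,k'). complex_of_real (mono_pow n J' k' * y ^ m) * a (k'(n:=m))) summable_on (UNIV \<times> T)"
        using keyF[OF J' y] has_sum_imp_summable by blast
      from summable_on_SigmaD1[where f="\<lambda>m k'. complex_of_real (mono_pow n J' k' * y ^ m) * a (k'(n:=m))", OF this]
      show ?thesis by auto
    qed
    have Gz: "G m = 0" for m
    proof (rule powser_unique_complex[OF e])
      fix y :: real assume y: "\<bar>y\<bar> < e"
      have "((\<lambda>m. \<Sum>\<^sub>\<infinity>k'\<in>T. complex_of_real (mono_pow n J' k' * y ^ m) * a (k'(n:=m))) has_sum 0) UNIV"
        using has_sum_Sigma'[OF keyF[OF J' y]] sumi[OF y] by (auto simp: has_sum_infsum)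
      then show "((\<lambda>m. complex_of_real (y ^ m) * G m) has_sum 0) UNIV"
        unfolding G_def rew infsum_cmult_right' .
    qed
    have "(\<lambda>k'. complex_of_real ((e/2) ^ m) * (complex_of_real (mono_pow n J' k') * a (k'(n:=m)))) summable_on T"
      using sumi[of "e/2" m] e unfolding rew by auto
    then have "(\<lambda>k'. complex_of_real (mono_pow n J' k') * a (k'(n:=m))) summable_on T"
      by (subst (asm) summable_on_cmult_right') (use e in auto)
    then show ?thesis using Gz[of m] unfolding G_def by (metis has_sum_infsum)
  qed
  have az: "a (k'(n:=m)) = 0" if "k' \<in> T" for k' m
    using Suc.IH[of "\<lambda>k'. a (k'(n:=m))" k'] inner that unfolding T_def by blast
  have "k(n:=0) \<in> T" using Suc.prems(2) by (auto simp: T_def multi_idx_def)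
  from az[OF this, of "k n"] show ?case by simp
qed

definition sd :: "nat set \<Rightarrow> nat set \<Rightarrow> nat set" where
  "sd A B = A \<union> B - (A \<inter> B)"

lemma sd_sd[simp]: "sd (sd y F) F = y" unfolding sd_def by auto
lemma sd_eq_iff: "(sd y F = A) \<longleftrightarrow> (y = sd A F)" unfolding sd_def by auto
lemma sd_empty[simp]: "sd y {} = y" unfolding sd_def by auto
lemma mem_sd: "n \<in> sd x F \<longleftrightarrow> (n \<in> x) \<noteq> (n \<in> F)" unfolding sd_def by auto

lemma apply_pauli_sd: "apply_pauli P v = (\<lambda>y. string_phase P (sd y (flips P)) * v (sd y (flips P)))"
  unfolding apply_pauli_def sd_def by simp

lemma flips_sub: "flips P \<subseteq> {n. P n \<noteq> PI}"
  unfolding flips_def by auto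

lemma pauli_supp: "is_pauli_string Nq P \<Longrightarrow> {n. P n \<noteq> PI} \<subseteq> {..<Nq}"
  unfolding is_pauli_string_def by (auto simp: not_less[symmetric])

lemma pauli_flips: "is_pauli_string Nq P \<Longrightarrow> flips P \<subseteq> {..<Nq}"
  using pauli_supp flips_sub by blast

lemma norm_pauli_phase[simp]: "cmod (pauli_phase p b) = 1"
  by (cases p) auto

lemma norm_string_phase[simp]: "cmod (string_phase P x) = 1"
  unfolding string_phase_def by (simp add: prod_norm[symmetric])

lemma string_phase_cong:
  assumes "\<And>n. P n \<noteq> PI \<Longrightarrow> (n \<in> x) = (n \<in> y)"
  shows "string_phase P x = string_phase P y"
  unfolding string_phase_def using assms by (intro prod.cong) auto

lemma cnj_pauli_phase: "cnj (pauli_phase p b) = pauli_phase p (if p = PX \<or> p = PY then \<not> b else b)"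
  by (cases p; cases b) auto

lemma cnj_string_phase: "cnj (string_phase P x) = string_phase P (sd x (flips P))"
proof -
  have "cnj (string_phase P x) = (\<Prod>n\<in>{n. P n \<noteq> PI}. cnj (pauli_phase (P n) (n \<in> x)))"
    unfolding string_phase_def by (simp add: cnj_prod)
  also have "\<dots> = string_phase P (sd x (flips P))"
    unfolding string_phase_def cnj_pauli_phase
    by (intro prod.cong refl) (auto simp: mem_sd flips_def)
  finally show ?thesis .
qed

lemma apply_pauli_delta:
  "apply_pauli P (\<lambda>x. if x = A then c else 0) = (\<lambda>x. if x = sd A (flips P) then c * string_phase P A else 0)"
  unfolding apply_pauli_sd by (auto simp: fun_eq_iff sd_eq_iff)

lemma pow_delta:
  "\<exists>c' F'. cmod c' = cmod c \<and> F' \<subseteq> F \<union> (if j = 0 then {} else flips P) \<and>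
     (apply_pauli P ^^ j) (\<lambda>x. if x = F then c else 0) = (\<lambda>x. if x = F' then c' else 0)"
proof (induction j)
  case 0 then show ?case by auto
next
  case (Suc j)
  then obtain c' F' where h: "cmod c' = cmod c" "F' \<subseteq> F \<union> (if j = 0 then {} else flips P)"
    "(apply_pauli P ^^ j) (\<lambda>x. if x = F then c else 0) = (\<lambda>x. if x = F' then c' else 0)" by blast
  show ?case
    apply (rule exI[of _ "c' * string_phase P F'"], rule exI[of _ "sd F' (flips P)"])
    using h by (auto simp: apply_pauli_delta norm_mult sd_def split: if_splits)
qed

lemma op_pow_delta:
  "\<exists>c F. cmod c = 1 \<and> (\<forall>n\<in>F. \<exists>i<m. k i \<noteq> 0 \<and> n \<in> flips (V i)) \<and>
     op_pow V k m ket0 = (\<lambda>x. if x = F then c else 0)"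
proof (induction m)
  case 0 then show ?case by (auto simp: ket0_def fun_eq_iff intro!: exI[of _ 1])
next
  case (Suc m)
  then obtain c F where h: "cmod c = 1" "\<forall>n\<in>F. \<exists>i<m. k i \<noteq> 0 \<and> n \<in> flips (V i)"
     "op_pow V k m ket0 = (\<lambda>x. if x = F then c else 0)" by blast
  obtain c' F' where h2: "cmod c' = cmod c" "F' \<subseteq> F \<union> (if k m = 0 then {} else flips (V m))"
     "(apply_pauli (V m) ^^ k m) (\<lambda>x. if x = F then c else 0) = (\<lambda>x. if x = F' then c' else 0)"
    using pow_delta by blast
  show ?case
    apply (rule exI[of _ c'], rule exI[of _ F'])
    using h h2 by (auto split: if_splits) (metis less_Suc_eq subsetD UnE empty_iff)+
qed

definition iq :: "nat \<Rightarrow> state \<Rightarrow> state \<Rightarrow> complex" where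
  "iq Nq u v = (\<Sum>x\<in>Pow {..<Nq}. cnj (u x) * v x)"

lemma sum_sd_reindex:
  assumes "F \<subseteq> {..<Nq}"
  shows "(\<Sum>x\<in>Pow {..<Nq}. g (sd x F)) = (\<Sum>x\<in>Pow {..<Nq}. g x)"
  by (rule sum.reindex_bij_witness[where i="\<lambda>x. sd x F" and j="\<lambda>x. sd x F"]) (use assms in \<open>auto simp: sd_def\<close>)

lemma iq_self: "iq Nq f f = complex_of_real (sq_norm Nq f)"
  unfolding iq_def sq_norm_def by (simp add: complex_norm_square mult.commute del: of_real_power)

lemma sq_norm_nonneg: "sq_norm Nq f \<ge> 0"
  unfolding sq_norm_def by (auto intro: sum_nonneg)

lemma sq_norm_pauli:
  assumes "is_pauli_string Nq P"
  shows "sq_norm Nq (apply_pauli P v) = sq_norm Nq v"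
proof -
  have "sq_norm Nq (apply_pauli P v) = (\<Sum>x\<in>Pow {..<Nq}. (cmod (v (sd x (flips P))))\<^sup>2)"
    unfolding sq_norm_def apply_pauli_sd by (simp add: norm_mult)
  also have "\<dots> = sq_norm Nq v"
    unfolding sq_norm_def by (rule sum_sd_reindex[OF pauli_flips[OF assms]])
  finally show ?thesis .
qed

lemma iq_pauli_herm:
  assumes "is_pauli_string Nq P"
  shows "iq Nq (apply_pauli P u) v = iq Nq u (apply_pauli P v)"
proof -
  let ?F = "flips P"
  have "iq Nq (apply_pauli P u) v = (\<Sum>x\<in>Pow {..<Nq}. cnj (string_phase P (sd x ?F) * u (sd x ?F)) * v (sd (sd x ?F) ?F))"
    unfolding iq_def apply_pauli_sd by simp
  also have "\<dots> = (\<Sum>x\<in>Pow {..<Nq}. cnj (string_phase P x * u x) * v (sd x ?F))"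
    by (rule sum_sd_reindex[OF pauli_flips[OF assms], where g="\<lambda>y. cnj (string_phase P y * u y) * v (sd y ?F)"])
  also have "\<dots> = iq Nq u (apply_pauli P v)"
    unfolding iq_def apply_pauli_sd by (intro sum.cong refl) (simp add: cnj_string_phase)
  finally show ?thesis .
qed

lemma amgm: "(a::real) * b \<le> (a\<^sup>2 + b\<^sup>2) / 2"
proof -
  have "0 \<le> (a - b)\<^sup>2" by simp
  then show ?thesis by (simp add: power2_diff field_simps)
qed

lemma iq_pauli_bound:
  assumes "is_pauli_string Nq P"
  shows "cmod (iq Nq u (apply_pauli P u)) \<le> sq_norm Nq u"
proof -
  have "cmod (iq Nq u (apply_pauli P u)) \<le> (\<Sum>x\<in>Pow {..<Nq}. cmod (u x) * cmod (apply_pauli P u x))"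
    unfolding iq_def by (rule order_trans[OF norm_sum]) (simp add: norm_mult)
  also have "\<dots> \<le> (\<Sum>x\<in>Pow {..<Nq}. ((cmod (u x))\<^sup>2 + (cmod (apply_pauli P u x))\<^sup>2) / 2)"
    by (intro sum_mono) (rule amgm)
  also have "\<dots> = (sq_norm Nq u + sq_norm Nq (apply_pauli P u)) / 2"
    unfolding sq_norm_def by (simp add: sum.distrib flip: sum_divide_distrib)
  also have "\<dots> = sq_norm Nq u" using sq_norm_pauli[OF assms] by simp
  finally show ?thesis .
qed

lemma iq_lin_right: "iq Nq k (\<lambda>x. a * f x - b * g x) = a * iq Nq k f - b * iq Nq k g"
  unfolding iq_def right_diff_distrib sum_subtractf sum_distrib_left by (simp add: mult.left_commute)

lemma iq_lin_left: "iq Nq (\<lambda>x. a * f x - b * g x) k = cnj a * iq Nq f k - cnj b * iq Nq g k"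
  unfolding iq_def complex_cnj_diff complex_cnj_mult left_diff_distrib sum_subtractf sum_distrib_left by (simp add: mult.assoc)

lemma iq_cnj: "iq Nq g f = cnj (iq Nq f g)"
  unfolding iq_def by (simp add: mult.commute)

lemma Zop_flips[simp]: "flips (Zop n) = {}"
  unfolding flips_def Zop_def by auto

lemma Zop_phase: "string_phase (Zop n) x = (if n \<in> x then -1 else 1)"
proof -
  have "{m. Zop n m \<noteq> PI} = {n}" unfolding Zop_def by auto
  then show ?thesis unfolding string_phase_def by (simp add: Zop_def)
qed

lemma apply_Zop: "apply_pauli (Zop n) v = (\<lambda>x. (if n \<in> x then -1 else 1) * v x)"
  unfolding apply_pauli_sd by (simp add: Zop_phase)

definition zd :: "nat \<Rightarrow> (nat \<Rightarrow> real) \<Rightarrow> nat set \<Rightarrow> real" where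
  "zd Nq h x = - (\<Sum>n<Nq. h n * (if n \<in> x then -1 else 1))"

lemma ham_form: "hamiltonian Nq h Nc V J v =
   (\<lambda>y. complex_of_real (zd Nq h y) * v y + (\<Sum>i<Nc. complex_of_real (J i) * apply_pauli (V i) v y))"
proof -
  have "(\<Sum>n<Nq. complex_of_real (h n) * ((if n \<in> y then -1 else 1) * v y))
      = complex_of_real (\<Sum>n<Nq. h n * (if n \<in> y then -1 else 1)) * v y" for y
    unfolding of_real_sum sum_distrib_right by (intro sum.cong refl) simp
  then show ?thesis unfolding hamiltonian_def zd_def apply_Zop by (simp add: fun_eq_iff)
qed

lemma apply_pauli_lin: "apply_pauli P (\<lambda>x. a * f x - b * g x) = (\<lambda>y. a * apply_pauli P f y - b * apply_pauli P g y)"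
  unfolding apply_pauli_def by (simp add: fun_eq_iff right_diff_distrib mult.left_commute)

lemma ham_lin: "hamiltonian Nq h Nc V J (\<lambda>x. a * f x - b * g x) =
   (\<lambda>y. a * hamiltonian Nq h Nc V J f y - b * hamiltonian Nq h Nc V J g y)"
  unfolding ham_form apply_pauli_lin
  apply (simp add: fun_eq_iff right_diff_distrib sum_subtractf sum_distrib_left mult.left_commute)
  apply (simp add: distrib_left sum_distrib_left)
  done

lemma iq_ham_left:
  "iq Nq (hamiltonian Nq h Nc V J u) v = (\<Sum>x\<in>Pow {..<Nq}. complex_of_real (zd Nq h x) * cnj (u x) * v x)
      + (\<Sum>i<Nc. complex_of_real (J i) * iq Nq (apply_pauli (V i) u) v)"
    unfolding ham_form iq_def
    by (simp add: distrib_right sum.distrib sum_distrib_left sum_distrib_right cnj_sum mult.assoc) (rule sum.swap)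

lemma iq_ham_herm:
  assumes V: "\<forall>i<Nc. is_pauli_string Nq (V i)"
  shows "iq Nq (hamiltonian Nq h Nc V J u) v = iq Nq u (hamiltonian Nq h Nc V J v)"
proof -
  have "iq Nq u (hamiltonian Nq h Nc V J v) = cnj (iq Nq (hamiltonian Nq h Nc V J v) u)"
    by (rule iq_cnj)
  also have "\<dots> = (\<Sum>x\<in>Pow {..<Nq}. complex_of_real (zd Nq h x) * cnj (u x) * v x)
      + (\<Sum>i<Nc. complex_of_real (J i) * iq Nq u (apply_pauli (V i) v))"
    unfolding iq_ham_left by (simp add: cnj_sum iq_cnj[of Nq u] mult.commute mult.left_commute)
  also have "\<dots> = (\<Sum>x\<in>Pow {..<Nq}. complex_of_real (zd Nq h x) * cnj (u x) * v x)
      + (\<Sum>i<Nc. complex_of_real (J i) * iq Nq (apply_pauli (V i) u) v)"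
    using iq_pauli_herm V by simp
  finally show ?thesis unfolding iq_ham_left by simp
qed

lemma cnj_mult_self: "cnj z * z = complex_of_real ((cmod z)\<^sup>2)"
  by (simp add: complex_norm_square mult.commute del: of_real_power)

lemma zd_empty: "zd Nq h {} = - (\<Sum>n<Nq. h n)"
  unfolding zd_def by simp

lemma zd_lower:
  assumes hpos: "\<forall>n<Nq. h n > 0" and hg: "\<forall>n<Nq. h n \<ge> g / 2"
    and x: "x \<subseteq> {..<Nq}" "x \<noteq> {}"
  shows "zd Nq h x \<ge> - (\<Sum>n<Nq. h n) + g"
proof -
  obtain n0 where n0: "n0 \<in> x" using x by auto
  have n0N: "n0 < Nq" using n0 x by auto
  have "zd Nq h x + (\<Sum>n<Nq. h n) = (\<Sum>n<Nq. if n \<in> x then 2 * h n else 0)"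
    unfolding zd_def by (simp add: sum_negf[symmetric] sum.distrib[symmetric]) (intro sum.cong refl, auto)
  also have "\<dots> \<ge> (if n0 \<in> x then 2 * h n0 else 0)"
    by (rule member_le_sum[where f="\<lambda>n. if n \<in> x then 2 * h n else 0"]) (use hpos n0N in auto)
  finally show ?thesis using n0 hg n0N by auto
qed

lemma iq_ham_self:
  assumes V: "\<forall>i<Nc. is_pauli_string Nq (V i)"
  shows "iq Nq u (hamiltonian Nq h Nc V J u) = (\<Sum>x\<in>Pow {..<Nq}. complex_of_real (zd Nq h x) * cnj (u x) * u x)
      + (\<Sum>i<Nc. complex_of_real (J i) * iq Nq u (apply_pauli (V i) u))"
  using iq_ham_left[of Nq h Nc V J u u] iq_ham_herm[OF V] iq_pauli_herm V by simp

lemma ham_lower: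
  assumes V: "\<forall>i<Nc. is_pauli_string Nq (V i)"
    and hpos: "\<forall>n<Nq. h n > 0" and hg: "\<forall>n<Nq. h n \<ge> g / 2"
    and u0: "u {} = 0"
  shows "Re (iq Nq u (hamiltonian Nq h Nc V J u)) \<ge> (- (\<Sum>n<Nq. h n) + g - (\<Sum>i<Nc. \<bar>J i\<bar>)) * sq_norm Nq u"
proof -
  let ?e = "- (\<Sum>n<Nq. h n) + g"
  have A: "Re (\<Sum>x\<in>Pow {..<Nq}. complex_of_real (zd Nq h x) * cnj (u x) * u x) \<ge> ?e * sq_norm Nq u"
  proof -
    have "Re (\<Sum>x\<in>Pow {..<Nq}. complex_of_real (zd Nq h x) * cnj (u x) * u x)
        = (\<Sum>x\<in>Pow {..<Nq}. zd Nq h x * (cmod (u x))\<^sup>2)"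
      by (simp add: mult.assoc cnj_mult_self del: of_real_power)
    also have "\<dots> \<ge> (\<Sum>x\<in>Pow {..<Nq}. ?e * (cmod (u x))\<^sup>2)"
    proof (rule sum_mono)
      fix x assume x: "x \<in> Pow {..<Nq}"
      show "?e * (cmod (u x))\<^sup>2 \<le> zd Nq h x * (cmod (u x))\<^sup>2"
      proof (cases "x = {}")
        case True then show ?thesis using u0 by simp
      next
        case False
        have z: "?e \<le> zd Nq h x" using zd_lower[OF hpos hg] x False by auto
        show ?thesis by (rule mult_right_mono[OF z]) simp
      qed
    qed
    finally show ?thesis unfolding sq_norm_def by (simp add: sum_distrib_left)
  qed
  have B: "Re (\<Sum>i<Nc. complex_of_real (J i) * iq Nq u (apply_pauli (V i) u)) \<ge> - (\<Sum>i<Nc. \<bar>J i\<bar>) * sq_norm Nq u"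
  proof -
    have "Re (\<Sum>i<Nc. complex_of_real (J i) * iq Nq u (apply_pauli (V i) u))
        = (\<Sum>i<Nc. Re (complex_of_real (J i) * iq Nq u (apply_pauli (V i) u)))" by simp
    also have "\<dots> \<ge> (\<Sum>i<Nc. - \<bar>J i\<bar> * sq_norm Nq u)"
    proof (rule sum_mono)
      fix i assume i: "i \<in> {..<Nc}"
      have "\<bar>Re (complex_of_real (J i) * iq Nq u (apply_pauli (V i) u))\<bar> \<le> cmod (complex_of_real (J i) * iq Nq u (apply_pauli (V i) u))"
        by (rule abs_Re_le_cmod)
      also have "\<dots> = \<bar>J i\<bar> * cmod (iq Nq u (apply_pauli (V i) u))" by (simp add: norm_mult)
      also have "\<dots> \<le> \<bar>J i\<bar> * sq_norm Nq u"
        using iq_pauli_bound[of Nq "V i" u] V i by (auto intro: mult_left_mono)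
      finally show "- \<bar>J i\<bar> * sq_norm Nq u \<le> Re (complex_of_real (J i) * iq Nq u (apply_pauli (V i) u))"
        by linarith
    qed
    finally show ?thesis by (simp add: sum_distrib_right sum_negf)
  qed
  show ?thesis using A B unfolding iq_ham_self[OF V] by (simp add: algebra_simps)
qed

lemma sq_norm_zero:
  assumes "u \<in> qstates Nq" "sq_norm Nq u = 0"
  shows "u = (\<lambda>_. 0)"
proof
  fix x
  show "u x = 0"
  proof (cases "x \<subseteq> {..<Nq}")
    case True
    have "\<forall>y\<in>Pow {..<Nq}. (cmod (u y))\<^sup>2 = 0"
      using assms(2) unfolding sq_norm_def by (subst (asm) sum_nonneg_eq_0_iff) auto
    then show ?thesis using True by auto
  next
    case False then show ?thesis using assms(1) unfolding qstates_def by auto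
  qed
qed

lemma LU:
  fixes lam mu :: real
  assumes V: "\<forall>i<Nc. is_pauli_string Nq (V i)"
    and hpos: "\<forall>n<Nq. h n > 0" and hg: "\<forall>n<Nq. h n \<ge> g / 2"
    and v: "v \<in> qstates Nq" and w: "w \<in> qstates Nq"
    and Hv: "hamiltonian Nq h Nc V J v = (\<lambda>x. complex_of_real lam * v x)"
    and Hw: "hamiltonian Nq h Nc V J w = (\<lambda>x. complex_of_real mu * w x)"
    and lv: "lam < - (\<Sum>n<Nq. h n) + g - (\<Sum>i<Nc. \<bar>J i\<bar>)"
    and lw: "mu < - (\<Sum>n<Nq. h n) + g - (\<Sum>i<Nc. \<bar>J i\<bar>)"
  shows "(\<lambda>x. w {} * v x) = (\<lambda>x. v {} * w x)"
proof -
  let ?H = "hamiltonian Nq h Nc V J"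
  let ?t = "- (\<Sum>n<Nq. h n) + g - (\<Sum>i<Nc. \<bar>J i\<bar>)"
  define a where "a = w {}"
  define b where "b = v {}"
  define u where "u = (\<lambda>x. a * v x - b * w x)"
  have u0: "u {} = 0" unfolding u_def a_def b_def by simp
  have uq: "u \<in> qstates Nq" using v w unfolding u_def qstates_def by auto
  have Hu: "?H u = (\<lambda>x. (a * lam) * v x - (b * mu) * w x)"
    unfolding u_def ham_lin Hv Hw by (simp add: mult.assoc)
  have low: "Re (iq Nq u (?H u)) \<ge> ?t * sq_norm Nq u"
    using ham_lower[of Nc Nq V h g u J] V hpos hg u0 by blast
  have Nv: "iq Nq v v = complex_of_real (sq_norm Nq v)" "iq Nq w w = complex_of_real (sq_norm Nq w)"
    by (rule iq_self)+
  have up: "Re (iq Nq u (?H u)) \<le> max lam mu * sq_norm Nq u"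
  proof (cases "lam = mu")
    case True
    have "(\<lambda>x. (a * lam) * v x - (b * mu) * w x) = (\<lambda>x. complex_of_real lam * u x)"
      unfolding u_def using True by (simp add: fun_eq_iff algebra_simps)
    then have "?H u = (\<lambda>x. complex_of_real lam * u x)" using Hu by simp
    then have "iq Nq u (?H u) = complex_of_real lam * complex_of_real (sq_norm Nq u)"
      by (simp add: iq_def sum_distrib_left mult.left_commute iq_self[symmetric])
    then show ?thesis by (simp add: mult_right_mono sq_norm_nonneg)
  next
    case False
    have "iq Nq (?H v) w = iq Nq v (?H w)" by (rule iq_ham_herm[OF V])
    then have "complex_of_real lam * iq Nq v w = complex_of_real mu * iq Nq v w"
      unfolding Hv Hw iq_def by (simp add: sum_distrib_left mult.assoc mult.left_commute)
    then have vw: "iq Nq v w = 0" using False by simp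
    have wv: "iq Nq w v = 0" using vw iq_cnj[of Nq w v] by simp
    have m: "z * complex_of_real r * (cnj z * complex_of_real t) = complex_of_real (r * ((cmod z)\<^sup>2 * t))" for z r t
    proof -
      have "z * complex_of_real r * (cnj z * complex_of_real t) = (z * cnj z) * complex_of_real (r * t)"
        by (simp add: ac_simps)
      also have "\<dots> = complex_of_real ((cmod z)\<^sup>2) * complex_of_real (r * t)"
        by (simp only: complex_norm_square)
      finally show ?thesis by (simp add: ac_simps)
    qed
    have iqu: "iq Nq u u = a * complex_of_real 1 * (cnj a * complex_of_real (sq_norm Nq v)) + b * complex_of_real 1 * (cnj b * complex_of_real (sq_norm Nq w))"
      unfolding u_def iq_lin_left iq_lin_right Nv vw wv by (simp add: ring_distribs)
    have e2: "sq_norm Nq u = (cmod a)\<^sup>2 * sq_norm Nq v + (cmod b)\<^sup>2 * sq_norm Nq w"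
    proof -
      have "complex_of_real (sq_norm Nq u) = complex_of_real ((cmod a)\<^sup>2 * sq_norm Nq v + (cmod b)\<^sup>2 * sq_norm Nq w)"
        using iq_self[of Nq u] iqu unfolding m by simp
      then show ?thesis by (simp only: of_real_eq_iff)
    qed
    have "iq Nq u (?H u) = a * complex_of_real lam * (cnj a * complex_of_real (sq_norm Nq v)) + b * complex_of_real mu * (cnj b * complex_of_real (sq_norm Nq w))"
      unfolding Hu unfolding u_def iq_lin_left iq_lin_right Nv vw wv by (simp add: ring_distribs)
    then have e1: "Re (iq Nq u (?H u)) = lam * ((cmod a)\<^sup>2 * sq_norm Nq v) + mu * ((cmod b)\<^sup>2 * sq_norm Nq w)"
      unfolding m by simp
    have p1: "(cmod a)\<^sup>2 * sq_norm Nq v \<ge> 0" "(cmod b)\<^sup>2 * sq_norm Nq w \<ge> 0"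
      by (simp_all add: sq_norm_nonneg)
    have "lam * ((cmod a)\<^sup>2 * sq_norm Nq v) \<le> max lam mu * ((cmod a)\<^sup>2 * sq_norm Nq v)"
      using p1 by (intro mult_right_mono) auto
    moreover have "mu * ((cmod b)\<^sup>2 * sq_norm Nq w) \<le> max lam mu * ((cmod b)\<^sup>2 * sq_norm Nq w)"
      using p1 by (intro mult_right_mono) auto
    ultimately show ?thesis unfolding e1 e2 by (simp add: algebra_simps)
  qed
  have d: "(?t - max lam mu) * sq_norm Nq u \<le> 0" using low up by (simp add: left_diff_distrib)
  have "?t - max lam mu > 0" using lv lw by simp
  then have "sq_norm Nq u \<le> 0" using d by (auto simp: mult_le_0_iff max_def split: if_splits)
  then have "sq_norm Nq u = 0" using sq_norm_nonneg[of Nq u] by linarith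
  then have "u = (\<lambda>_. 0)" by (rule sq_norm_zero[OF uq])
  then show ?thesis unfolding u_def a_def b_def by (auto simp: fun_eq_iff)
qed

definition tensor :: "nat set \<Rightarrow> state \<Rightarrow> state \<Rightarrow> state" where
  "tensor Q f g = (\<lambda>x. f (x \<inter> Q) * g (x - Q))"

lemma tensA:
  assumes "\<forall>n. P n \<noteq> PI \<longrightarrow> n \<in> Q"
  shows "apply_pauli P (tensor Q f g) = tensor Q (apply_pauli P f) g"
proof -
  have F: "flips P \<subseteq> Q" using flips_sub assms by blast
  have 1: "sd y (flips P) \<inter> Q = sd (y \<inter> Q) (flips P)" for y using F unfolding sd_def by auto
  have 2: "sd y (flips P) - Q = y - Q" for y using F unfolding sd_def by auto
  have 3: "string_phase P (sd y (flips P)) = string_phase P (sd (y \<inter> Q) (flips P))" for y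
    by (rule string_phase_cong) (use assms in \<open>auto simp: mem_sd\<close>)
  show ?thesis
  proof
    fix y show "apply_pauli P (tensor Q f g) y = tensor Q (apply_pauli P f) g y"
      unfolding apply_pauli_sd tensor_def 1[of y] 2[of y] 3[of y] by (simp add: mult.assoc)
  qed
qed

lemma tensB:
  assumes "\<forall>n. P n \<noteq> PI \<longrightarrow> n \<notin> Q"
  shows "apply_pauli P (tensor Q f g) = tensor Q f (apply_pauli P g)"
proof -
  have F: "flips P \<inter> Q = {}" using flips_sub assms by blast
  have 1: "sd y (flips P) \<inter> Q = y \<inter> Q" for y using F unfolding sd_def by auto
  have 2: "sd y (flips P) - Q = sd (y - Q) (flips P)" for y using F unfolding sd_def by auto
  have 3: "string_phase P (sd y (flips P)) = string_phase P (sd (y - Q) (flips P))" for y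
    by (rule string_phase_cong) (use assms in \<open>auto simp: mem_sd\<close>)
  show ?thesis
  proof
    fix y show "apply_pauli P (tensor Q f g) y = tensor Q f (apply_pauli P g) y"
      unfolding apply_pauli_sd tensor_def 1[of y] 2[of y] 3[of y] by (simp add: mult.left_commute)
  qed
qed

lemma tensA_pow:
  assumes "\<forall>n. P n \<noteq> PI \<longrightarrow> n \<in> Q"
  shows "(apply_pauli P ^^ j) (tensor Q f g) = tensor Q ((apply_pauli P ^^ j) f) g"
  by (induction j) (auto simp: tensA[OF assms])

lemma tensB_pow:
  assumes "\<forall>n. P n \<noteq> PI \<longrightarrow> n \<notin> Q"
  shows "(apply_pauli P ^^ j) (tensor Q f g) = tensor Q f ((apply_pauli P ^^ j) g)"
  by (induction j) (auto simp: tensB[OF assms])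

lemma ket0_tensor: "ket0 = tensor Q ket0 ket0"
  unfolding ket0_def tensor_def by (auto simp: fun_eq_iff)

lemma op_pow_tensor:
  assumes "\<forall>i<m. a i = 0 \<or> b i = 0"
    and "\<forall>i<m. a i \<noteq> 0 \<longrightarrow> (\<forall>n. V i n \<noteq> PI \<longrightarrow> n \<in> Q)"
    and "\<forall>i<m. b i \<noteq> 0 \<longrightarrow> (\<forall>n. V i n \<noteq> PI \<longrightarrow> n \<notin> Q)"
  shows "op_pow V (\<lambda>i. a i + b i) m ket0 = tensor Q (op_pow V a m ket0) (op_pow V b m ket0)"
  using assms
proof (induction m)
  case 0 then show ?case using ket0_tensor by simp
next
  case (Suc m)
  have IH: "op_pow V (\<lambda>i. a i + b i) m ket0 = tensor Q (op_pow V a m ket0) (op_pow V b m ket0)"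
    using Suc.prems by (intro Suc.IH) (auto simp: less_Suc_eq)
  show ?case
  proof (cases "a m = 0")
    case True
    show ?thesis
    proof (cases "b m = 0")
      case True2: True
      then show ?thesis using True IH by simp
    next
      case False
      then have c: "\<forall>n. V m n \<noteq> PI \<longrightarrow> n \<notin> Q" using Suc.prems by auto
      show ?thesis using True IH by (simp add: tensB_pow[OF c])
    qed
  next
    case False
    then have b0: "b m = 0" using Suc.prems by auto
    have c: "\<forall>n. V m n \<noteq> PI \<longrightarrow> n \<in> Q" using Suc.prems False by auto
    show ?thesis using b0 IH by (simp add: tensA_pow[OF c])
  qed
qed

lemma sq_norm_tensor:
  assumes f: "\<forall>x. \<not> x \<subseteq> Q \<longrightarrow> f x = 0" and g: "\<forall>x. x \<inter> Q \<noteq> {} \<longrightarrow> g x = 0"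
  shows "sq_norm Nq (tensor Q f g) = sq_norm Nq f * sq_norm Nq g"
proof -
  let ?N = "{..<Nq}"
  have sf: "sq_norm Nq f = (\<Sum>a\<in>Pow (?N \<inter> Q). (cmod (f a))\<^sup>2)"
    unfolding sq_norm_def by (rule sum.mono_neutral_right) (use f in auto)
  have sg: "sq_norm Nq g = (\<Sum>b\<in>Pow (?N - Q). (cmod (g b))\<^sup>2)"
    unfolding sq_norm_def by (rule sum.mono_neutral_right) (use g in auto)
  have "sq_norm Nq f * sq_norm Nq g = (\<Sum>p\<in>Pow (?N \<inter> Q) \<times> Pow (?N - Q). (cmod (f (fst p)))\<^sup>2 * (cmod (g (snd p)))\<^sup>2)"
    unfolding sf sg sum_product sum.cartesian_product by (simp add: case_prod_beta)
  also have "\<dots> = (\<Sum>x\<in>Pow ?N. (cmod (f (x \<inter> Q)))\<^sup>2 * (cmod (g (x - Q)))\<^sup>2)"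
    apply (rule sum.reindex_bij_witness[where i="\<lambda>x. (x \<inter> Q, x - Q)" and j="\<lambda>p. fst p \<union> snd p"])
    subgoal for p by (cases p) auto
    subgoal for p by (cases p) auto
    subgoal by auto
    subgoal by auto
    subgoal for p proof (cases p)
      case (Pair a b)
      assume "p \<in> Pow (?N \<inter> Q) \<times> Pow (?N - Q)"
      then have "(a \<union> b) \<inter> Q = a" "(a \<union> b) - Q = b" using Pair by auto
      then show ?thesis using Pair by simp
    qed
    done
  also have "\<dots> = sq_norm Nq (tensor Q f g)"
    unfolding sq_norm_def tensor_def by (simp add: norm_mult power_mult_distrib)
  finally show ?thesis by simp
qed

definition rs :: "nat set \<Rightarrow> (nat \<Rightarrow> 'a::zero) \<Rightarrow> nat \<Rightarrow> 'a" where
  "rs S J = (\<lambda>i. if i \<in> S then J i else 0)"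

definition sup_in :: "nat \<Rightarrow> nat set \<Rightarrow> (nat \<Rightarrow> nat) \<Rightarrow> bool" where
  "sup_in Nc S k \<longleftrightarrow> (\<forall>i<Nc. k i \<noteq> 0 \<longrightarrow> i \<in> S)"

definition tm :: "nat \<Rightarrow> (nat \<Rightarrow> nat \<Rightarrow> pauli) \<Rightarrow> ((nat \<Rightarrow> nat) \<Rightarrow> real) \<Rightarrow> (nat \<Rightarrow> real) \<Rightarrow> (nat \<Rightarrow> nat) \<Rightarrow> nat set \<Rightarrow> complex" where
  "tm Nc V C J k x = complex_of_real (mono_pow Nc J k * C k) * op_pow V k Nc ket0 x"

definition Psi :: "nat \<Rightarrow> (nat \<Rightarrow> nat \<Rightarrow> pauli) \<Rightarrow> ((nat \<Rightarrow> nat) \<Rightarrow> real) \<Rightarrow> (nat \<Rightarrow> real) \<Rightarrow> state" where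
  "Psi Nc V C J = (\<lambda>x. \<Sum>\<^sub>\<infinity>k\<in>multi_idx Nc. tm Nc V C J k x)"

lemma mono_pow_rs:
  "mono_pow Nc (rs S J) k = (if sup_in Nc S k then mono_pow Nc J k else 0)"
proof (cases "sup_in Nc S k")
  case True
  then show ?thesis unfolding mono_pow_def rs_def sup_in_def by (auto intro!: prod.cong)
next
  case False
  then obtain i where i: "i < Nc" "k i \<noteq> 0" "i \<notin> S" unfolding sup_in_def by auto
  then have "rs S J i ^ k i = 0" unfolding rs_def by simp
  then have "mono_pow Nc (rs S J) k = 0" unfolding mono_pow_def using i
    by (intro prod_zero) auto
  then show ?thesis using False by simp
qed

lemma mono_pow_add: "mono_pow Nc J (\<lambda>i. a i + b i) = mono_pow Nc J a * mono_pow Nc J b"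
  unfolding mono_pow_def by (simp add: power_add prod.distrib)

lemma mono_pow_zero_idx: "mono_pow Nc J (\<lambda>_. 0) = 1"
  unfolding mono_pow_def by simp

lemma op_pow_zero_idx: "op_pow V (\<lambda>_. 0) m v = v"
  by (induction m) auto

lemma mono_pow_bound:
  assumes J: "\<forall>i<Nc. \<bar>J i\<bar> \<le> \<rho> * a" and r: "0 \<le> \<rho>" "\<rho> \<le> 1" and a: "a \<ge> 0"
    and k: "\<exists>i<Nc. k i \<noteq> 0"
  shows "\<bar>mono_pow Nc J k\<bar> \<le> \<rho> * mono_pow Nc (\<lambda>_. a) k"
proof -
  have "\<bar>mono_pow Nc J k\<bar> = (\<Prod>i<Nc. \<bar>J i\<bar> ^ k i)"
    unfolding mono_pow_def by (simp add: abs_prod power_abs)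
  also have "\<dots> \<le> (\<Prod>i<Nc. (\<rho> * a) ^ k i)"
    by (intro prod_mono) (use J in \<open>auto intro: power_mono\<close>)
  also have "\<dots> = \<rho> ^ (\<Sum>i<Nc. k i) * mono_pow Nc (\<lambda>_. a) k"
    unfolding mono_pow_def power_sum by (simp add: power_mult_distrib prod.distrib)
  also have "\<dots> \<le> \<rho> * mono_pow Nc (\<lambda>_. a) k"
  proof (rule mult_right_mono)
    obtain i where "i < Nc" "k i \<noteq> 0" using k by auto
    then have "k i \<le> (\<Sum>i<Nc. k i)" by (intro member_le_sum) auto
    then have "(\<Sum>i<Nc. k i) \<ge> 1" using \<open>k i \<noteq> 0\<close> by linarith
    then show "\<rho> ^ (\<Sum>i<Nc. k i) \<le> \<rho>" using r power_decreasing[of 1 "\<Sum>i<Nc. k i" \<rho>] by simp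
    show "0 \<le> mono_pow Nc (\<lambda>_. a) k" unfolding mono_pow_def using a by (auto intro: prod_nonneg)
  qed
  finally show ?thesis .
qed

lemma has_sum_prod_complex:
  fixes f g :: "'a \<Rightarrow> complex"
  assumes f: "(f has_sum s) A" and g: "(g has_sum t) B"
  shows "((\<lambda>p. f (fst p) * g (snd p)) has_sum (s * t)) (A \<times> B)"
proof -
  have fa: "(\<lambda>x. norm (f x)) summable_on A" using f summable_on_iff_abs_summable_on_complex has_sum_imp_summable by blast
  have ga: "(\<lambda>x. norm (g x)) summable_on B" using g summable_on_iff_abs_summable_on_complex has_sum_imp_summable by blast
  have "(\<lambda>p. norm (f (fst p) * g (snd p))) summable_on (A \<times> B)"
  proof (subst Infinite_Sum.abs_summable_on_Sigma_iff, intro conjI ballI)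
    fix x assume "x \<in> A"
    show "(\<lambda>y. norm (f (fst (x, y)) * g (snd (x, y)))) summable_on B"
      using ga by (simp add: norm_mult summable_on_cmult_right)
  next
    have "(\<lambda>x. norm (\<Sum>\<^sub>\<infinity>y\<in>B. norm (f (fst (x, y)) * g (snd (x, y))))) = (\<lambda>x. norm (f x) * (\<Sum>\<^sub>\<infinity>y\<in>B. norm (g y)))"
      by (simp add: norm_mult infsum_cmult_right' abs_mult infsum_nonneg)
    moreover have "(\<lambda>x. norm (f x) * (\<Sum>\<^sub>\<infinity>y\<in>B. norm (g y))) summable_on A"
      using fa by (rule summable_on_cmult_left)
    ultimately show "(\<lambda>x. norm (\<Sum>\<^sub>\<infinity>y\<in>B. norm (f (fst (x, y)) * g (snd (x, y))))) summable_on A"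
      by simp
  qed
  then have sm: "(\<lambda>p. f (fst p) * g (snd p)) summable_on (A \<times> B)"
    by (rule abs_summable_summable)
  show ?thesis
  proof (rule has_sum_SigmaI[OF _ _ sm])
    show "\<And>x. x \<in> A \<Longrightarrow> ((\<lambda>y. f (fst (x, y)) * g (snd (x, y))) has_sum f x * t) B"
      using g by (simp add: has_sum_cmult_right)
    show "((\<lambda>x. f x * t) has_sum s * t) A" using f by (rule has_sum_cmult_left)
  qed
qed

lemma Psi_support:
  assumes "\<forall>i<Nc. J i \<noteq> 0 \<longrightarrow> flips (V i) \<subseteq> Q" and "\<not> x \<subseteq> Q"
  shows "Psi Nc V C J x = 0"
proof -
  have "tm Nc V C J k x = 0" for k
  proof (cases "\<exists>i<Nc. k i \<noteq> 0 \<and> J i = 0")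
    case True
    then obtain i where i: "i < Nc" "k i \<noteq> 0" "J i = 0" by auto
    have "mono_pow Nc J k = 0" unfolding mono_pow_def using i
      by (intro prod_zero) auto
    then show ?thesis unfolding tm_def by simp
  next
    case False
    obtain c F where cF: "cmod c = 1" "\<forall>n\<in>F. \<exists>i<Nc. k i \<noteq> 0 \<and> n \<in> flips (V i)"
      "op_pow V k Nc ket0 = (\<lambda>x. if x = F then c else 0)" using op_pow_delta by blast
    have "F \<subseteq> Q" using cF(2) False assms(1) by blast
    then have "x \<noteq> F" using assms(2) by auto
    then show ?thesis unfolding tm_def cF(3) by simp
  qed
  then show ?thesis unfolding Psi_def by simp
qed

lemma energy_bound:
  assumes V: "\<forall>i<Nc. is_pauli_string Nq (V i)"
    and v: "v \<in> qstates Nq" and n1: "sq_norm Nq v = 1"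
    and Hv: "hamiltonian Nq h Nc V J v = (\<lambda>x. complex_of_real e * v x)"
    and v0: "cmod (v {}) \<ge> 1/2"
  shows "e \<le> - (\<Sum>n<Nq. h n) + 2 * (\<Sum>i<Nc. \<bar>J i\<bar>)"
proof -
  have bnd: "cmod (v x) \<le> 1" for x
  proof (cases "x \<subseteq> {..<Nq}")
    case True
    have "(cmod (v x))\<^sup>2 \<le> sq_norm Nq v" unfolding sq_norm_def
      by (rule member_le_sum[where f="\<lambda>x. (cmod (v x))\<^sup>2"]) (use True in auto)
    then show ?thesis using n1 by (simp add: power_le_one_iff abs_le_square_iff)
  next
    case False then show ?thesis using v unfolding qstates_def by auto
  qed
  have "complex_of_real e * v {} = complex_of_real (zd Nq h {}) * v {} + (\<Sum>i<Nc. complex_of_real (J i) * apply_pauli (V i) v {})"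
    using fun_cong[OF Hv, of "{}"] unfolding ham_form by simp
  then have eq: "complex_of_real (e - zd Nq h {}) * v {} = (\<Sum>i<Nc. complex_of_real (J i) * apply_pauli (V i) v {})"
    by (simp add: algebra_simps)
  have "\<bar>e - zd Nq h {}\<bar> * cmod (v {}) = cmod (\<Sum>i<Nc. complex_of_real (J i) * apply_pauli (V i) v {})"
    by (subst eq[symmetric]) (simp only: norm_mult norm_of_real)
  also have "\<dots> \<le> (\<Sum>i<Nc. cmod (complex_of_real (J i) * apply_pauli (V i) v {}))"
    by (rule norm_sum)
  also have "\<dots> = (\<Sum>i<Nc. \<bar>J i\<bar> * cmod (apply_pauli (V i) v {}))"
    by (simp add: norm_mult)
  also have "\<dots> \<le> (\<Sum>i<Nc. \<bar>J i\<bar>)"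
  proof (rule sum_mono)
    fix i assume "i \<in> {..<Nc}"
    have "cmod (apply_pauli (V i) v {}) \<le> 1"
      unfolding apply_pauli_sd by (simp add: norm_mult bnd)
    then show "\<bar>J i\<bar> * cmod (apply_pauli (V i) v {}) \<le> \<bar>J i\<bar>"
      by (simp add: mult_left_le)
  qed
  finally have *: "\<bar>e - zd Nq h {}\<bar> * cmod (v {}) \<le> (\<Sum>i<Nc. \<bar>J i\<bar>)" .
  have "(e - zd Nq h {}) * (1/2) \<le> \<bar>e - zd Nq h {}\<bar> * cmod (v {})"
  proof (cases "e - zd Nq h {} \<le> 0")
    case True
    have "(e - zd Nq h {}) * (1/2) \<le> 0" using True by simp
    moreover have "0 \<le> \<bar>e - zd Nq h {}\<bar> * cmod (v {})" by simp
    ultimately show ?thesis by linarith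
  next
    case False
    then have "(e - zd Nq h {}) * (1/2) \<le> (e - zd Nq h {}) * cmod (v {})"
      using v0 by (intro mult_left_mono) auto
    then show ?thesis using False by simp
  qed
  then have "(e - zd Nq h {}) * (1/2) \<le> (\<Sum>i<Nc. \<bar>J i\<bar>)" using * by linarith
  then show ?thesis unfolding zd_empty by (simp add: field_simps)
qed

lemma zd_split: "zd Nq h y = zd Nq h (y \<inter> Q) + zd Nq h (y - Q) + (\<Sum>n<Nq. h n)"
  unfolding zd_def by (simp add: sum_negf[symmetric] sum.distrib[symmetric]) (intro sum.cong refl, auto)

lemma TE:
  assumes disj: "SA \<inter> SB = {}"
    and hA: "\<forall>i\<in>SA. \<forall>n. V i n \<noteq> PI \<longrightarrow> n \<in> Q" and hB: "\<forall>i\<in>SB. \<forall>n. V i n \<noteq> PI \<longrightarrow> n \<notin> Q"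
    and HA: "hamiltonian Nq h Nc V (rs SA J) fA = (\<lambda>x. complex_of_real eA * fA x)"
    and HB: "hamiltonian Nq h Nc V (rs SB J) fB = (\<lambda>x. complex_of_real eB * fB x)"
  shows "hamiltonian Nq h Nc V (rs (SA \<union> SB) J) (tensor Q fA fB)
       = (\<lambda>x. complex_of_real (eA + eB + (\<Sum>n<Nq. h n)) * tensor Q fA fB x)"
proof
  fix y
  define yA where "yA = y \<inter> Q"
  define yB where "yB = y - Q"
  define SmA where "SmA = (\<Sum>i<Nc. complex_of_real (rs SA J i) * apply_pauli (V i) fA yA)"
  define SmB where "SmB = (\<Sum>i<Nc. complex_of_real (rs SB J i) * apply_pauli (V i) fB yB)"
  have trm: "complex_of_real (rs (SA \<union> SB) J i) * apply_pauli (V i) (tensor Q fA fB) y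
      = complex_of_real (rs SA J i) * apply_pauli (V i) fA yA * fB yB + fA yA * (complex_of_real (rs SB J i) * apply_pauli (V i) fB yB)" for i
  proof (cases "i \<in> SA")
    case True
    then have "i \<notin> SB" using disj by auto
    moreover have "apply_pauli (V i) (tensor Q fA fB) = tensor Q (apply_pauli (V i) fA) fB"
      using hA True by (intro tensA) auto
    ultimately show ?thesis using True unfolding rs_def tensor_def yA_def yB_def by simp
  next
    case False
    show ?thesis
    proof (cases "i \<in> SB")
      case True
      have "apply_pauli (V i) (tensor Q fA fB) = tensor Q fA (apply_pauli (V i) fB)"
        using hB True by (intro tensB) auto
      then show ?thesis using True False unfolding rs_def tensor_def yA_def yB_def by (simp add: ac_simps)
    next
      case False2: False
      then show ?thesis using False unfolding rs_def by simp
    qed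
  qed
  have sum: "(\<Sum>i<Nc. complex_of_real (rs (SA \<union> SB) J i) * apply_pauli (V i) (tensor Q fA fB) y) = SmA * fB yB + fA yA * SmB"
    unfolding trm SmA_def SmB_def by (simp add: sum.distrib sum_distrib_left sum_distrib_right)
  have eA: "SmA = complex_of_real eA * fA yA - complex_of_real (zd Nq h yA) * fA yA"
    using fun_cong[OF HA, of yA] unfolding ham_form SmA_def by (simp add: algebra_simps)
  have eB: "SmB = complex_of_real eB * fB yB - complex_of_real (zd Nq h yB) * fB yB"
    using fun_cong[OF HB, of yB] unfolding ham_form SmB_def by (simp add: algebra_simps)
  have z: "zd Nq h y = zd Nq h yA + zd Nq h yB + (\<Sum>n<Nq. h n)"
    unfolding yA_def yB_def by (rule zd_split)
  show "hamiltonian Nq h Nc V (rs (SA \<union> SB) J) (tensor Q fA fB) y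
       = complex_of_real (eA + eB + (\<Sum>n<Nq. h n)) * tensor Q fA fB y"
    unfolding ham_form sum unfolding eA eB z tensor_def yA_def[symmetric] yB_def[symmetric]
    by (simp add: algebra_simps)
qed

lemma sq_norm_scale: "sq_norm Nq (\<lambda>x. a * f x) = (cmod a)\<^sup>2 * sq_norm Nq f"
  unfolding sq_norm_def by (simp add: norm_mult power_mult_distrib sum_distrib_left)

lemma has_sum_diffc:
  fixes f g :: "'a \<Rightarrow> complex"
  assumes "(f has_sum a) A" "(g has_sum b) A"
  shows "((\<lambda>x. f x - g x) has_sum (a - b)) A"
  using has_sum_add[OF assms(1) has_sum_uminusI[OF assms(2)]] by simp

lemma zero_in_multi_idx: "(\<lambda>_. 0) \<in> multi_idx Nc"
  unfolding multi_idx_def by simp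

lemma multi_idx_nonzero: "k \<in> multi_idx Nc \<Longrightarrow> k \<noteq> (\<lambda>_. 0) \<Longrightarrow> \<exists>i<Nc. k i \<noteq> 0"
  unfolding multi_idx_def by (auto simp: fun_eq_iff not_less[symmetric])

lemma sq_norm_ket0: "sq_norm Nq ket0 = 1"
proof -
  have "sq_norm Nq ket0 = (\<Sum>x\<in>{{}}. (cmod (ket0 x))\<^sup>2)"
    unfolding sq_norm_def by (rule sum.mono_neutral_right) (auto simp: ket0_def)
  then show ?thesis by (simp add: ket0_def)
qed

context
  fixes Nq Nc :: nat and h :: "nat \<Rightarrow> real" and V :: "nat \<Rightarrow> nat \<Rightarrow> pauli"
    and C :: "(nat \<Rightarrow> nat) \<Rightarrow> real" and \<epsilon> :: real
  assumes h_pos: "\<forall>n<Nq. h n > 0"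
    and V_pauli: "\<forall>i<Nc. is_pauli_string Nq (V i)"
    and eps: "\<epsilon> > 0"
    and exps: "\<forall>J :: nat \<Rightarrow> real. (\<forall>i<Nc. \<bar>J i\<bar> < \<epsilon>) \<longrightarrow>
        (\<exists>\<psi>. (\<forall>x. ((\<lambda>k. complex_of_real (mono_pow Nc J k * C k) * op_pow V k Nc ket0 x)
                        has_sum \<psi> x) (multi_idx Nc))
             \<and> is_phased_ground_state Nq (hamiltonian Nq h Nc V J) \<psi>)"
begin

lemma Psi_ok:
  assumes "\<forall>i<Nc. \<bar>J i\<bar> < \<epsilon>"
  shows "(\<forall>x. ((\<lambda>k. tm Nc V C J k x) has_sum Psi Nc V C J x) (multi_idx Nc))
      \<and> is_phased_ground_state Nq (hamiltonian Nq h Nc V J) (Psi Nc V C J)"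
proof -
  obtain \<psi> where p: "\<forall>x. ((\<lambda>k. tm Nc V C J k x) has_sum \<psi> x) (multi_idx Nc)"
      "is_phased_ground_state Nq (hamiltonian Nq h Nc V J) \<psi>"
    using exps assms unfolding tm_def by blast
  have "\<psi> = Psi Nc V C J"
    unfolding Psi_def by (rule ext) (simp add: infsumI[OF p(1)[rule_format]])
  then show ?thesis using p by simp
qed

lemma Psi_props:
  assumes "\<forall>i<Nc. \<bar>J i\<bar> < \<epsilon>"
  shows "Psi Nc V C J \<in> qstates Nq" "sq_norm Nq (Psi Nc V C J) = 1"
    "Im (Psi Nc V C J {}) = 0" "Re (Psi Nc V C J {}) > 0"
    "\<exists>e. hamiltonian Nq h Nc V J (Psi Nc V C J) = (\<lambda>x. complex_of_real e * Psi Nc V C J x)"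
  using Psi_ok[OF assms] unfolding is_phased_ground_state_def is_ground_state_def is_eigenpair_def
  by auto

lemma Psi_hs:
  assumes "\<forall>i<Nc. \<bar>J i\<bar> < \<epsilon>"
  shows "((\<lambda>k. tm Nc V C J k x) has_sum Psi Nc V C J x) (multi_idx Nc)"
  using Psi_ok[OF assms] by blast

lemma C0: "C (\<lambda>_. 0) = 1"
proof -
  define J0 :: "nat \<Rightarrow> real" where "J0 = (\<lambda>_. 0)"
  have box: "\<forall>i<Nc. \<bar>J0 i\<bar> < \<epsilon>" using eps unfolding J0_def by simp
  have J0rs: "J0 = rs {} J0" unfolding J0_def rs_def by simp
  have tz: "tm Nc V C J0 k x = 0" if "k \<in> multi_idx Nc" "k \<noteq> (\<lambda>_. 0)" for k x
  proof -
    have "\<not> sup_in Nc {} k" using multi_idx_nonzero[OF that] unfolding sup_in_def by auto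
    then have "mono_pow Nc J0 k = 0" by (subst J0rs) (simp add: mono_pow_rs)
    then show ?thesis unfolding tm_def by simp
  qed
  have "((\<lambda>k. tm Nc V C J0 k x) has_sum tm Nc V C J0 (\<lambda>_. 0) x) (multi_idx Nc)" for x
    by (rule has_sum_finite_neutralI[where B="{\<lambda>_. 0}"]) (use tz zero_in_multi_idx in auto)
  then have "Psi Nc V C J0 x = complex_of_real (C (\<lambda>_. 0)) * ket0 x" for x
  proof -
    have "Psi Nc V C J0 x = tm Nc V C J0 (\<lambda>_. 0) x"
      using Psi_hs[OF box, of x] \<open>\<And>x. ((\<lambda>k. tm Nc V C J0 k x) has_sum tm Nc V C J0 (\<lambda>_. 0) x) (multi_idx Nc)\<close>
      by (rule has_sum_unique)
    then show ?thesis by (simp add: tm_def mono_pow_zero_idx op_pow_zero_idx)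
  qed
  then have PJ: "Psi Nc V C J0 = (\<lambda>x. complex_of_real (C (\<lambda>_. 0)) * ket0 x)" by auto
  have "sq_norm Nq (Psi Nc V C J0) = 1" by (rule Psi_props(2)[OF box])
  then have "(C (\<lambda>_. 0))\<^sup>2 = 1" unfolding PJ sq_norm_scale sq_norm_ket0 by simp
  moreover have "C (\<lambda>_. 0) > 0" using Psi_props(4)[OF box] unfolding PJ by (simp add: ket0_def)
  ultimately show ?thesis using power2_eq_1_iff[of "C (\<lambda>_. 0)"] by auto
qed

lemma close: "\<exists>r>0. r \<le> \<epsilon> \<and> (\<forall>J. (\<forall>i<Nc. \<bar>J i\<bar> < r) \<longrightarrow> cmod (Psi Nc V C J {}) \<ge> 1/2)"
proof -
  define Js :: "nat \<Rightarrow> real" where "Js = (\<lambda>_. \<epsilon>/2)"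
  have boxs: "\<forall>i<Nc. \<bar>Js i\<bar> < \<epsilon>" using eps unfolding Js_def by simp
  define f where "f k = tm Nc V C Js k {}" for k
  have fs: "(\<lambda>k. norm (f k)) summable_on multi_idx Nc"
  proof -
    have "f summable_on multi_idx Nc"
      using has_sum_imp_summable[OF Psi_hs[OF boxs, of "{}"]] unfolding f_def by simp
    then show ?thesis using summable_on_iff_abs_summable_on_complex by blast
  qed
  define M where "M = infsum (\<lambda>k. norm (f k)) (multi_idx Nc)"
  have M0: "M \<ge> 0" unfolding M_def by (rule infsum_nonneg) auto
  define \<rho> where "\<rho> = min 1 (1 / (2 * (M + 1)))"
  have r0: "\<rho> > 0" "\<rho> \<le> 1" using M0 unfolding \<rho>_def by auto
  have rM: "\<rho> * M \<le> 1/2"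
  proof -
    have "\<rho> * M \<le> (1 / (2 * (M + 1))) * M" using M0 unfolding \<rho>_def by (intro mult_right_mono) auto
    also have "\<dots> \<le> 1/2" using M0 by (simp add: field_simps)
    finally show ?thesis .
  qed
  define r where "r = \<rho> * (\<epsilon>/2)"
  have rpos: "r > 0" unfolding r_def using r0 eps by simp
  have rle: "r \<le> \<epsilon>"
  proof -
    have "\<rho> * (\<epsilon>/2) \<le> 1 * (\<epsilon>/2)" by (rule mult_right_mono) (use r0 eps in auto)
    then show ?thesis using eps unfolding r_def by linarith
  qed
  have main: "cmod (Psi Nc V C J {}) \<ge> 1/2" if J: "\<forall>i<Nc. \<bar>J i\<bar> < r" for J
  proof -
    have box: "\<forall>i<Nc. \<bar>J i\<bar> < \<epsilon>" using J rle by force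
    have Jb: "\<forall>i<Nc. \<bar>J i\<bar> \<le> \<rho> * (\<epsilon>/2)" using J unfolding r_def by force
    define g where "g k = (if k = (\<lambda>_. 0) then 0 else tm Nc V C J k {})" for k
    have hs0: "((\<lambda>k. if k = (\<lambda>_. 0) then tm Nc V C J k {} else 0) has_sum tm Nc V C J (\<lambda>_. 0) {}) (multi_idx Nc)"
      by (rule has_sum_finite_neutralI[where B="{\<lambda>_. 0}"]) (use zero_in_multi_idx in auto)
    have t0: "tm Nc V C J (\<lambda>_. 0) {} = 1"
      by (simp add: tm_def mono_pow_zero_idx op_pow_zero_idx C0 ket0_def)
    have gs: "(g has_sum (Psi Nc V C J {} - 1)) (multi_idx Nc)"
    proof -
      have "(\<lambda>k. tm Nc V C J k {} - (if k = (\<lambda>_. 0) then tm Nc V C J k {} else 0)) = g"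
        by (auto simp: g_def fun_eq_iff)
      then show ?thesis using has_sum_diffc[OF Psi_hs[OF box, of "{}"] hs0] unfolding t0 by simp
    qed
    have bs: "((\<lambda>k. \<rho> * norm (f k)) has_sum (\<rho> * M)) (multi_idx Nc)"
      unfolding M_def by (rule has_sum_cmult_right) (use fs in simp)
    have gb: "norm (g k) \<le> \<rho> * norm (f k)" if k: "k \<in> multi_idx Nc" for k
    proof (cases "k = (\<lambda>_. 0)")
      case True then show ?thesis unfolding g_def using r0 by simp
    next
      case False
      have "\<bar>mono_pow Nc J k\<bar> \<le> \<rho> * mono_pow Nc Js k"
        unfolding Js_def by (rule mono_pow_bound[OF Jb]) (use r0 eps multi_idx_nonzero[OF k False] in auto)
      moreover have "mono_pow Nc Js k \<ge> 0" unfolding mono_pow_def Js_def using eps by (auto intro: prod_nonneg)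
      then have ab: "\<bar>mono_pow Nc Js k\<bar> = mono_pow Nc Js k" by simp
      have nt: "norm (tm Nc V C J' k {}) = \<bar>mono_pow Nc J' k\<bar> * (\<bar>C k\<bar> * cmod (op_pow V k Nc ket0 {}))" for J'
        unfolding tm_def by (simp add: norm_mult abs_mult)
      have "\<bar>mono_pow Nc J k\<bar> * (\<bar>C k\<bar> * cmod (op_pow V k Nc ket0 {}))
          \<le> (\<rho> * mono_pow Nc Js k) * (\<bar>C k\<bar> * cmod (op_pow V k Nc ket0 {}))"
        by (rule mult_right_mono) (use calculation in auto)
      then show ?thesis unfolding g_def f_def using False nt[of J] nt[of Js] ab by (simp add: mult.assoc)
    qed
    have "norm (Psi Nc V C J {} - 1) \<le> \<rho> * M"
      by (rule norm_infsum_le[OF gs bs gb])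
    then have "norm (Psi Nc V C J {} - 1) \<le> 1/2" using rM by linarith
    moreover have "1 \<le> norm (Psi Nc V C J {}) + norm (Psi Nc V C J {} - 1)"
      using norm_triangle_sub[of 1 "Psi Nc V C J {}"] norm_minus_commute[of 1 "Psi Nc V C J {}"] by simp
    ultimately show ?thesis by linarith
  qed
  show ?thesis using rpos rle main by blast
qed

lemma abs_rs_le: "\<bar>rs S J i\<bar> \<le> \<bar>(J::nat\<Rightarrow>real) i\<bar>"
  unfolding rs_def by auto

lemma PL:
  assumes disj: "SA \<inter> SB = {}"
    and hA: "\<forall>i\<in>SA. \<forall>n. V i n \<noteq> PI \<longrightarrow> n \<in> Q" and hB: "\<forall>i\<in>SB. \<forall>n. V i n \<noteq> PI \<longrightarrow> n \<notin> Q"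
  shows "\<exists>r>0. \<forall>J. (\<forall>i<Nc. \<bar>J i\<bar> < r) \<longrightarrow>
     Psi Nc V C (rs (SA \<union> SB) J) = tensor Q (Psi Nc V C (rs SA J)) (Psi Nc V C (rs SB J))"
proof -
  obtain r0 where r0: "r0 > 0" "r0 \<le> \<epsilon>" "\<forall>J. (\<forall>i<Nc. \<bar>J i\<bar> < r0) \<longrightarrow> cmod (Psi Nc V C J {}) \<ge> 1/2"
    using close by blast
  define hm where "hm = Min (insert 1 (h ` {..<Nq}))"
  have hm0: "hm > 0" unfolding hm_def using h_pos by (subst Min_gr_iff) auto
  have hmle: "\<forall>n<Nq. h n \<ge> hm" unfolding hm_def by (auto intro: Min_le)
  define g where "g = 2 * hm"
  have g0: "g > 0" and hg: "\<forall>n<Nq. h n \<ge> g / 2" using hm0 hmle unfolding g_def by auto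
  define r where "r = min r0 (g / (3 * (real Nc + 1)))"
  have rpos: "r > 0" unfolding r_def using r0 g0 by simp
  show ?thesis
  proof (intro exI[of _ r] conjI allI impI rpos)
    fix J :: "nat \<Rightarrow> real"
    assume J: "\<forall>i<Nc. \<bar>J i\<bar> < r"
    have rr0: "r \<le> r0" unfolding r_def by simp
    have boxr: "\<forall>i<Nc. \<bar>rs S J i\<bar> < r" for S
    proof (intro allI impI)
      fix i assume i: "i < Nc"
      show "\<bar>rs S J i\<bar> < r" using abs_rs_le[of S J i] J[rule_format, OF i] by linarith
    qed
    have boxr0: "\<forall>i<Nc. \<bar>rs S J i\<bar> < r0" for S
    proof (intro allI impI)
      fix i assume i: "i < Nc"
      show "\<bar>rs S J i\<bar> < r0" using boxr[of S, rule_format, OF i] rr0 by linarith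
    qed
    have boxe: "\<forall>i<Nc. \<bar>rs S J i\<bar> < \<epsilon>" for S
    proof (intro allI impI)
      fix i assume i: "i < Nc"
      show "\<bar>rs S J i\<bar> < \<epsilon>" using boxr0[of S, rule_format, OF i] r0(2) by linarith
    qed
    let ?d = "\<lambda>S. \<Sum>i<Nc. \<bar>rs S J i\<bar>"
    have dsplit: "?d (SA \<union> SB) = ?d SA + ?d SB"
    proof -
      have "\<bar>rs (SA \<union> SB) J i\<bar> = \<bar>rs SA J i\<bar> + \<bar>rs SB J i\<bar>" for i
        using disj unfolding rs_def by auto
      then show ?thesis by (simp add: sum.distrib)
    qed
    have dsmall: "3 * ?d (SA \<union> SB) < g"
    proof -
      have "?d (SA \<union> SB) \<le> (\<Sum>i<Nc. r)" by (intro sum_mono) (use boxr in \<open>auto intro: less_imp_le\<close>)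
      also have "\<dots> = real Nc * r" by simp
      also have "\<dots> \<le> real Nc * (g / (3 * (real Nc + 1)))" unfolding r_def by (intro mult_left_mono) auto
      finally have "3 * ?d (SA \<union> SB) \<le> g * (real Nc / (real Nc + 1))" by (simp add: field_simps)
      also have "\<dots> < g" using g0 by (simp add: field_simps)
      finally show ?thesis .
    qed
    define \<psi>1 where "\<psi>1 = Psi Nc V C (rs (SA \<union> SB) J)"
    define \<psi>A where "\<psi>A = Psi Nc V C (rs SA J)"
    define \<psi>B where "\<psi>B = Psi Nc V C (rs SB J)"
    obtain e1 where e1: "hamiltonian Nq h Nc V (rs (SA \<union> SB) J) \<psi>1 = (\<lambda>x. complex_of_real e1 * \<psi>1 x)"
      using Psi_props(5)[OF boxe] unfolding \<psi>1_def by blast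
    obtain eA where eA: "hamiltonian Nq h Nc V (rs SA J) \<psi>A = (\<lambda>x. complex_of_real eA * \<psi>A x)"
      using Psi_props(5)[OF boxe] unfolding \<psi>A_def by blast
    obtain eB where eB: "hamiltonian Nq h Nc V (rs SB J) \<psi>B = (\<lambda>x. complex_of_real eB * \<psi>B x)"
      using Psi_props(5)[OF boxe] unfolding \<psi>B_def by blast
    have eb: "e \<le> - (\<Sum>n<Nq. h n) + 2 * ?d S"
      if "hamiltonian Nq h Nc V (rs S J) (Psi Nc V C (rs S J)) = (\<lambda>x. complex_of_real e * Psi Nc V C (rs S J) x)" for S e
    proof -
      have "cmod (Psi Nc V C (rs S J) {}) \<ge> 1/2" using r0(3) boxr0[of S] by blast
      then show ?thesis by (rule energy_bound[OF V_pauli Psi_props(1)[OF boxe] Psi_props(2)[OF boxe] that])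
    qed
    have b1: "e1 \<le> - (\<Sum>n<Nq. h n) + 2 * ?d (SA \<union> SB)" by (rule eb[OF e1[unfolded \<psi>1_def]])
    have bA: "eA \<le> - (\<Sum>n<Nq. h n) + 2 * ?d SA" by (rule eb[OF eA[unfolded \<psi>A_def]])
    have bB: "eB \<le> - (\<Sum>n<Nq. h n) + 2 * ?d SB" by (rule eb[OF eB[unfolded \<psi>B_def]])
    define chi where "chi = tensor Q \<psi>A \<psi>B"
    have Hchi: "hamiltonian Nq h Nc V (rs (SA \<union> SB) J) chi = (\<lambda>x. complex_of_real (eA + eB + (\<Sum>n<Nq. h n)) * chi x)"
      unfolding chi_def by (rule TE[OF disj hA hB eA eB])
    have qA: "\<psi>A \<in> qstates Nq" "\<psi>B \<in> qstates Nq" "\<psi>1 \<in> qstates Nq"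
      unfolding \<psi>A_def \<psi>B_def \<psi>1_def using Psi_props(1)[OF boxe] by auto
    have qchi: "chi \<in> qstates Nq"
    proof -
      have zA: "\<forall>x. \<not> x \<subseteq> {..<Nq} \<longrightarrow> \<psi>A x = 0" using qA(1) unfolding qstates_def by simp
      have zB: "\<forall>x. \<not> x \<subseteq> {..<Nq} \<longrightarrow> \<psi>B x = 0" using qA(2) unfolding qstates_def by simp
      have "chi x = 0" if x: "\<not> x \<subseteq> {..<Nq}" for x
      proof (cases "x \<inter> Q \<subseteq> {..<Nq}")
        case True
        have "\<not> x - Q \<subseteq> {..<Nq}"
        proof
          assume "x - Q \<subseteq> {..<Nq}"
          with True have "x \<subseteq> {..<Nq}" by blast
          with x show False by simp
        qed
        then have "\<psi>B (x - Q) = 0" using zB by simp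
        then show ?thesis unfolding chi_def tensor_def by simp
      next
        case False
        then have "\<psi>A (x \<inter> Q) = 0" using zA by simp
        then show ?thesis unfolding chi_def tensor_def by simp
      qed
      then show ?thesis unfolding qstates_def by blast
    qed
    have LUres: "(\<lambda>x. chi {} * \<psi>1 x) = (\<lambda>x. \<psi>1 {} * chi x)"
      by (rule LU[OF V_pauli h_pos hg qA(3) qchi e1 Hchi]) (use b1 bA bB dsplit dsmall in linarith)+
    have suppA: "\<forall>x. \<not> x \<subseteq> Q \<longrightarrow> \<psi>A x = 0"
    proof (intro allI impI)
      fix x assume "\<not> x \<subseteq> Q"
      moreover have "\<forall>i<Nc. rs SA J i \<noteq> 0 \<longrightarrow> flips (V i) \<subseteq> Q"
      proof (intro allI impI)
        fix i assume "i < Nc" "rs SA J i \<noteq> 0"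
        then have "i \<in> SA" unfolding rs_def by (simp split: if_splits)
        then show "flips (V i) \<subseteq> Q" using hA flips_sub[of "V i"] by blast
      qed
      ultimately show "\<psi>A x = 0" unfolding \<psi>A_def by (intro Psi_support) auto
    qed
    have suppB: "\<forall>x. x \<inter> Q \<noteq> {} \<longrightarrow> \<psi>B x = 0"
    proof (intro allI impI)
      fix x assume "x \<inter> Q \<noteq> {}"
      then have "\<not> x \<subseteq> - Q" by auto
      moreover have "\<forall>i<Nc. rs SB J i \<noteq> 0 \<longrightarrow> flips (V i) \<subseteq> - Q"
      proof (intro allI impI)
        fix i assume "i < Nc" "rs SB J i \<noteq> 0"
        then have "i \<in> SB" unfolding rs_def by (simp split: if_splits)
        then show "flips (V i) \<subseteq> - Q" using hB flips_sub[of "V i"] by blast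
      qed
      ultimately show "\<psi>B x = 0" unfolding \<psi>B_def by (intro Psi_support) auto
    qed
    have nchi: "sq_norm Nq chi = 1"
    proof -
      have "sq_norm Nq \<psi>A = 1" "sq_norm Nq \<psi>B = 1"
        unfolding \<psi>A_def \<psi>B_def using Psi_props(2)[OF boxe] by auto
      then show ?thesis unfolding chi_def sq_norm_tensor[OF suppA suppB] by simp
    qed
    have n1: "sq_norm Nq \<psi>1 = 1" unfolding \<psi>1_def using Psi_props(2)[OF boxe] by simp
    have c0: "chi {} = \<psi>A {} * \<psi>B {}" unfolding chi_def tensor_def by simp
    define a where "a = Re (chi {})"
    define b where "b = Re (\<psi>1 {})"
    define pA where "pA = Re (\<psi>A {})"
    define pB where "pB = Re (\<psi>B {})"
    have eqA: "\<psi>A {} = complex_of_real pA" "\<psi>B {} = complex_of_real pB"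
      using Psi_props(3)[OF boxe] unfolding \<psi>A_def \<psi>B_def pA_def pB_def by (simp_all add: complex_eq_iff)
    have pp: "pA > 0" "pB > 0"
      using Psi_props(4)[OF boxe] unfolding \<psi>A_def \<psi>B_def pA_def pB_def by auto
    have c0': "chi {} = complex_of_real (pA * pB)" unfolding c0 eqA by simp
    have ar: "chi {} = complex_of_real a" unfolding a_def c0' by simp
    have apos: "a > 0" unfolding a_def c0' using pp by simp
    have br: "\<psi>1 {} = complex_of_real b" and bpos: "b > 0"
      using Psi_props(3,4)[OF boxe] unfolding b_def \<psi>1_def by (simp_all add: complex_eq_iff)
    have "sq_norm Nq (\<lambda>x. chi {} * \<psi>1 x) = sq_norm Nq (\<lambda>x. \<psi>1 {} * chi x)" using LUres by simp
    then have "a\<^sup>2 = b\<^sup>2" unfolding sq_norm_scale nchi n1 ar br by simp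
    then have ab: "a = b" using apos bpos by (simp add: power2_eq_iff)
    have "\<psi>1 = chi"
    proof
      fix x
      have "complex_of_real b * \<psi>1 x = complex_of_real b * chi x"
        using fun_cong[OF LUres, of x] unfolding ar br ab .
      then show "\<psi>1 x = chi x" using bpos by simp
    qed
    then show "Psi Nc V C (rs (SA \<union> SB) J) = tensor Q (Psi Nc V C (rs SA J)) (Psi Nc V C (rs SB J))"
      unfolding \<psi>1_def chi_def \<psi>A_def \<psi>B_def .
  qed
qed

end

lemma MI_lt: "k \<in> multi_idx Nc \<Longrightarrow> k i \<noteq> 0 \<Longrightarrow> i < Nc"
  by (cases "i < Nc") (auto simp: multi_idx_def)

lemma abs_rs_le2: "\<bar>rs S J i\<bar> \<le> \<bar>(J::nat\<Rightarrow>real) i\<bar>"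
  unfolding rs_def by auto

lemma rs_MI: "k \<in> multi_idx Nc \<Longrightarrow> rs S k \<in> multi_idx Nc"
  unfolding multi_idx_def rs_def by auto

lemma sup_in_rs: "sup_in Nc S (rs S k)"
  unfolding sup_in_def rs_def by auto

lemma sum_MI: "p1 \<in> multi_idx Nc \<Longrightarrow> p2 \<in> multi_idx Nc \<Longrightarrow> (\<lambda>i. p1 i + p2 i) \<in> multi_idx Nc"
  unfolding multi_idx_def by auto

lemma sup_in_sum: "sup_in Nc S1 p1 \<Longrightarrow> sup_in Nc S2 p2 \<Longrightarrow> sup_in Nc (S1 \<union> S2) (\<lambda>i. p1 i + p2 i)"
  unfolding sup_in_def by auto

lemma rs_sum_split:
  assumes "SA \<inter> SB = {}" "p1 \<in> multi_idx Nc" "p2 \<in> multi_idx Nc" "sup_in Nc SA p1" "sup_in Nc SB p2"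
  shows "rs SA (\<lambda>i. p1 i + p2 i) = p1" "rs SB (\<lambda>i. p1 i + p2 i) = p2"
proof -
  have z1: "p1 i = 0" if "i \<notin> SA" for i
  proof (cases "i < Nc")
    case True then show ?thesis using assms(4) that unfolding sup_in_def by blast
  next
    case False then show ?thesis using assms(2) unfolding multi_idx_def by simp
  qed
  have z2: "p2 i = 0" if "i \<notin> SB" for i
  proof (cases "i < Nc")
    case True then show ?thesis using assms(5) that unfolding sup_in_def by blast
  next
    case False then show ?thesis using assms(3) unfolding multi_idx_def by simp
  qed
  show "rs SA (\<lambda>i. p1 i + p2 i) = p1"
    unfolding rs_def using z1 z2 assms(1) by (auto simp: fun_eq_iff)
  show "rs SB (\<lambda>i. p1 i + p2 i) = p2"
    unfolding rs_def using z1 z2 assms(1) by (auto simp: fun_eq_iff)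
qed

lemma rs_recombine:
  assumes "SA \<inter> SB = {}" "k \<in> multi_idx Nc" "sup_in Nc (SA \<union> SB) k"
  shows "(\<lambda>i. rs SA k i + rs SB k i) = k"
proof
  fix i
  have "k i = 0" if "i \<notin> SA \<union> SB"
  proof (cases "i < Nc")
    case True then show ?thesis using assms(3) that unfolding sup_in_def by blast
  next
    case False then show ?thesis using assms(2) unfolding multi_idx_def by simp
  qed
  then show "rs SA k i + rs SB k i = k i" unfolding rs_def using assms(1) by auto
qed

context
  fixes Nq Nc :: nat and h :: "nat \<Rightarrow> real" and V :: "nat \<Rightarrow> nat \<Rightarrow> pauli"
    and C :: "(nat \<Rightarrow> nat) \<Rightarrow> real" and \<epsilon> :: real
  assumes h_pos: "\<forall>n<Nq. h n > 0"
    and V_pauli: "\<forall>i<Nc. is_pauli_string Nq (V i)"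
    and eps: "\<epsilon> > 0"
    and exps: "\<forall>J :: nat \<Rightarrow> real. (\<forall>i<Nc. \<bar>J i\<bar> < \<epsilon>) \<longrightarrow>
        (\<exists>\<psi>. (\<forall>x. ((\<lambda>k. complex_of_real (mono_pow Nc J k * C k) * op_pow V k Nc ket0 x)
                        has_sum \<psi> x) (multi_idx Nc))
             \<and> is_phased_ground_state Nq (hamiltonian Nq h Nc V J) \<psi>)"
begin

lemmas PL' = PL[OF h_pos V_pauli eps exps]
lemmas Psi_hs' = Psi_hs[OF h_pos V_pauli eps exps]
lemma CL:
  assumes disj: "SA \<inter> SB = {}"
    and hA: "\<forall>i\<in>SA. \<forall>n. V i n \<noteq> PI \<longrightarrow> n \<in> Q" and hB: "\<forall>i\<in>SB. \<forall>n. V i n \<noteq> PI \<longrightarrow> n \<notin> Q"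
    and a: "a \<in> multi_idx Nc" and b: "b \<in> multi_idx Nc"
    and sa: "sup_in Nc SA a" and sb: "sup_in Nc SB b"
  shows "C (\<lambda>i. a i + b i) = C a * C b"
proof -
  obtain r where r: "r > 0" "\<forall>J. (\<forall>i<Nc. \<bar>J i\<bar> < r) \<longrightarrow>
     Psi Nc V C (rs (SA \<union> SB) J) = tensor Q (Psi Nc V C (rs SA J)) (Psi Nc V C (rs SB J))"
    using PL'[OF disj hA hB] by blast
  define r' where "r' = min r \<epsilon>"
  have r'pos: "r' > 0" unfolding r'_def using r eps by simp
  let ?S = "SA \<union> SB"
  let ?MI = "multi_idx Nc"
  let ?op = "\<lambda>k. op_pow V k Nc ket0"
  obtain ca Fa where A: "cmod ca = 1" "\<forall>n\<in>Fa. \<exists>i<Nc. a i \<noteq> 0 \<and> n \<in> flips (V i)"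
      "?op a = (\<lambda>x. if x = Fa then ca else 0)" using op_pow_delta by blast
  obtain cb Fb where B: "cmod cb = 1" "\<forall>n\<in>Fb. \<exists>i<Nc. b i \<noteq> 0 \<and> n \<in> flips (V i)"
      "?op b = (\<lambda>x. if x = Fb then cb else 0)" using op_pow_delta by blast
  have FaQ: "Fa \<subseteq> Q"
  proof
    fix n assume "n \<in> Fa"
    then obtain i where i: "i < Nc" "a i \<noteq> 0" "n \<in> flips (V i)" using A(2) by blast
    then have "i \<in> SA" using sa unfolding sup_in_def by blast
    then show "n \<in> Q" using hA i(3) flips_sub[of "V i"] by blast
  qed
  have FbQ: "Fb \<inter> Q = {}"
  proof -
    have "n \<notin> Q" if "n \<in> Fb" for n
    proof -
      obtain i where i: "i < Nc" "b i \<noteq> 0" "n \<in> flips (V i)" using B(2) \<open>n \<in> Fb\<close> by blast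
      then have "i \<in> SB" using sb unfolding sup_in_def by blast
      then show "n \<notin> Q" using hB i(3) flips_sub[of "V i"] by blast
    qed
    then show ?thesis by blast
  qed
  define x0 where "x0 = Fa \<union> Fb"
  have x0A: "x0 \<inter> Q = Fa" and x0B: "x0 - Q = Fb" unfolding x0_def using FaQ FbQ by blast+
  define L where "L k = (if sup_in Nc ?S k then complex_of_real (C k) * ?op k x0 else 0)" for k
  define R where "R k = (if sup_in Nc ?S k then complex_of_real (C (rs SA k) * C (rs SB k)) * ?op (rs SA k) Fa * ?op (rs SB k) Fb else 0)" for k
  have key: "((\<lambda>k. complex_of_real (mono_pow Nc J k) * (L k - R k)) has_sum 0) ?MI"
    if J: "\<forall>i<Nc. \<bar>J i\<bar> < r'" for J
  proof -
    have boxr: "\<forall>i<Nc. \<bar>J i\<bar> < r"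
    proof (intro allI impI)
      fix i assume "i < Nc" then show "\<bar>J i\<bar> < r" using J unfolding r'_def by force
    qed
    have boxe: "\<forall>i<Nc. \<bar>rs S J i\<bar> < \<epsilon>" for S
    proof (intro allI impI)
      fix i assume i: "i < Nc"
      have "\<bar>J i\<bar> < \<epsilon>" using J i unfolding r'_def by force
      then show "\<bar>rs S J i\<bar> < \<epsilon>" using abs_rs_le2[of S J i] by linarith
    qed
    have HL: "((\<lambda>k. complex_of_real (mono_pow Nc J k) * L k) has_sum Psi Nc V C (rs ?S J) x0) ?MI"
    proof -
      have "tm Nc V C (rs ?S J) k x0 = complex_of_real (mono_pow Nc J k) * L k" for k
        unfolding tm_def L_def mono_pow_rs by simp
      then show ?thesis using Psi_hs'[OF boxe[of ?S], where x=x0] by simp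
    qed
    let ?D = "{p \<in> ?MI \<times> ?MI. sup_in Nc SA (fst p) \<and> sup_in Nc SB (snd p)}"
    let ?T = "{k \<in> ?MI. sup_in Nc ?S k}"
    have P: "((\<lambda>p. tm Nc V C (rs SA J) (fst p) Fa * tm Nc V C (rs SB J) (snd p) Fb) has_sum
        (Psi Nc V C (rs SA J) Fa * Psi Nc V C (rs SB J) Fb)) (?MI \<times> ?MI)"
      by (rule has_sum_prod_complex[OF Psi_hs'[OF boxe] Psi_hs'[OF boxe]])
    have PD: "((\<lambda>p. tm Nc V C (rs SA J) (fst p) Fa * tm Nc V C (rs SB J) (snd p) Fb) has_sum
        (Psi Nc V C (rs SA J) Fa * Psi Nc V C (rs SB J) Fb)) ?D"
    proof (rule has_sum_cong_neutral[THEN iffD1, OF _ _ _ P])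
      show "\<And>x. x \<in> ?D - ?MI \<times> ?MI \<Longrightarrow> tm Nc V C (rs SA J) (fst x) Fa * tm Nc V C (rs SB J) (snd x) Fb = 0"
        by blast
      show "\<And>x. x \<in> ?MI \<times> ?MI - ?D \<Longrightarrow> tm Nc V C (rs SA J) (fst x) Fa * tm Nc V C (rs SB J) (snd x) Fb = 0"
        unfolding tm_def mono_pow_rs by auto
    qed auto
    have PT: "((\<lambda>k. complex_of_real (mono_pow Nc J k) * R k) has_sum
        (Psi Nc V C (rs SA J) Fa * Psi Nc V C (rs SB J) Fb)) ?T"
    proof -
      have "((\<lambda>p. tm Nc V C (rs SA J) (fst p) Fa * tm Nc V C (rs SB J) (snd p) Fb) has_sum
          (Psi Nc V C (rs SA J) Fa * Psi Nc V C (rs SB J) Fb)) ?D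
        = ((\<lambda>k. complex_of_real (mono_pow Nc J k) * R k) has_sum
          (Psi Nc V C (rs SA J) Fa * Psi Nc V C (rs SB J) Fb)) ?T"
      proof (rule has_sum_reindex_bij_witness[where i="\<lambda>k. (rs SA k, rs SB k)" and j="\<lambda>p i. fst p i + snd p i"])
        fix p assume p: "p \<in> ?D"
        then have p1: "fst p \<in> ?MI" "sup_in Nc SA (fst p)" and p2: "snd p \<in> ?MI" "sup_in Nc SB (snd p)" by auto
        note spl = rs_sum_split[OF disj p1(1) p2(1) p1(2) p2(2)]
        show "(rs SA (\<lambda>i. fst p i + snd p i), rs SB (\<lambda>i. fst p i + snd p i)) = p"
          unfolding spl by simp
        show "(\<lambda>i. fst p i + snd p i) \<in> ?T"
          using sum_MI[OF p1(1) p2(1)] sup_in_sum[OF p1(2) p2(2)] by simp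
        have mp: "mono_pow Nc J (\<lambda>i. fst p i + snd p i) = mono_pow Nc (rs SA J) (fst p) * mono_pow Nc (rs SB J) (snd p)"
          unfolding mono_pow_add mono_pow_rs using p1(2) p2(2) by simp
        show "complex_of_real (mono_pow Nc J (\<lambda>i. fst p i + snd p i)) * R (\<lambda>i. fst p i + snd p i)
            = tm Nc V C (rs SA J) (fst p) Fa * tm Nc V C (rs SB J) (snd p) Fb"
          unfolding R_def tm_def spl mp using sup_in_sum[OF p1(2) p2(2)] by (simp add: ac_simps)
      next
        fix k assume k: "k \<in> ?T"
        show "(\<lambda>i. fst (rs SA k, rs SB k) i + snd (rs SA k, rs SB k) i) = k"
          using rs_recombine[OF disj, of k Nc] k by simp
        show "(rs SA k, rs SB k) \<in> ?D" using k rs_MI sup_in_rs by auto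
      qed simp
      then show ?thesis using PD by simp
    qed
    have HR: "((\<lambda>k. complex_of_real (mono_pow Nc J k) * R k) has_sum
        (Psi Nc V C (rs SA J) Fa * Psi Nc V C (rs SB J) Fb)) ?MI"
      by (rule has_sum_cong_neutral[THEN iffD1, OF _ _ _ PT]) (auto simp: R_def)
    have eq: "Psi Nc V C (rs ?S J) x0 = Psi Nc V C (rs SA J) Fa * Psi Nc V C (rs SB J) Fb"
      using spec[OF r(2), of J, THEN mp, OF boxr] unfolding tensor_def x0A[symmetric] x0B[symmetric] by (simp add: fun_eq_iff)
    show ?thesis using has_sum_diffc[OF HL HR] unfolding eq by (simp add: right_diff_distrib)
  qed
  have LR: "L k - R k = 0" if "k \<in> ?MI" for k
    by (rule UL[OF r'pos _ that]) (use key in blast)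
  have abT: "sup_in Nc ?S (\<lambda>i. a i + b i)" by (rule sup_in_sum[OF sa sb])
  note spl = rs_sum_split[OF disj a b sa sb]
  have dis: "\<forall>i<Nc. a i = 0 \<or> b i = 0" using sa sb disj unfolding sup_in_def by blast
  have cA: "\<forall>i<Nc. a i \<noteq> 0 \<longrightarrow> (\<forall>n. V i n \<noteq> PI \<longrightarrow> n \<in> Q)" using sa hA unfolding sup_in_def by blast
  have cB: "\<forall>i<Nc. b i \<noteq> 0 \<longrightarrow> (\<forall>n. V i n \<noteq> PI \<longrightarrow> n \<notin> Q)" using sb hB unfolding sup_in_def by blast
  have opab: "?op (\<lambda>i. a i + b i) x0 = ca * cb"
    using op_pow_tensor[OF dis cA cB] x0A x0B unfolding tensor_def A(3) B(3) by simp
  have "complex_of_real (C (\<lambda>i. a i + b i)) * (ca * cb) = complex_of_real (C a * C b) * (ca * cb)"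
    using LR[OF sum_MI[OF a b]] abT unfolding L_def R_def spl opab A(3) B(3) by (simp add: ac_simps)
  moreover have "ca * cb \<noteq> 0" using A(1) B(1) by auto
  ultimately have "complex_of_real (C (\<lambda>i. a i + b i)) = complex_of_real (C a * C b)" by simp
  then show ?thesis by (simp only: of_real_eq_iff)
qed

lemma IL:
  assumes i: "i < Nc" and Vi: "\<forall>n. V i n = PI" and k: "k \<in> multi_idx Nc" and ki: "k i \<noteq> 0"
  shows "C k = 0"
proof -
  let ?MI = "multi_idx Nc"
  let ?op = "\<lambda>k. op_pow V k Nc ket0"
  have fl: "flips (V i) = {}" using Vi unfolding flips_def by simp
  define L where "L k = (if sup_in Nc {i} k then complex_of_real (C k) * ?op k {} else 0)" for k
  define R :: "(nat \<Rightarrow> nat) \<Rightarrow> complex" where "R k = (if k = (\<lambda>_. 0) then 1 else 0)" for k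
  have key: "((\<lambda>k. complex_of_real (mono_pow Nc J k) * (L k - R k)) has_sum 0) ?MI"
    if J: "\<forall>j<Nc. \<bar>J j\<bar> < \<epsilon>" for J
  proof -
    have boxe: "\<forall>j<Nc. \<bar>rs {i} J j\<bar> < \<epsilon>"
    proof (intro allI impI)
      fix j assume j: "j < Nc"
      show "\<bar>rs {i} J j\<bar> < \<epsilon>" using abs_rs_le2[of "{i}" J j] J[rule_format, OF j] by linarith
    qed
    define \<psi> where "\<psi> = Psi Nc V C (rs {i} J)"
    have supp: "\<psi> x = 0" if "x \<noteq> {}" for x
    proof -
      have "\<forall>j<Nc. rs {i} J j \<noteq> 0 \<longrightarrow> flips (V j) \<subseteq> {}"
        unfolding rs_def using fl by auto
      moreover have "\<not> x \<subseteq> {}" using that by auto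
      ultimately show ?thesis unfolding \<psi>_def by (rule Psi_support)
    qed
    have "sq_norm Nq \<psi> = (\<Sum>x\<in>{{}}. (cmod (\<psi> x))\<^sup>2)"
      unfolding sq_norm_def by (rule sum.mono_neutral_right) (auto simp: supp)
    then have "(cmod (\<psi> {}))\<^sup>2 = 1"
      using Psi_props(2)[OF h_pos V_pauli eps exps boxe] unfolding \<psi>_def by simp
    moreover have "Im (\<psi> {}) = 0" "Re (\<psi> {}) > 0"
      using Psi_props(3,4)[OF h_pos V_pauli eps exps boxe] unfolding \<psi>_def by auto
    ultimately have p1: "\<psi> {} = 1"
      by (simp add: cmod_def complex_eq_iff power2_eq_1_iff)
    have HL: "((\<lambda>k. complex_of_real (mono_pow Nc J k) * L k) has_sum 1) ?MI"
    proof -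
      have "tm Nc V C (rs {i} J) k {} = complex_of_real (mono_pow Nc J k) * L k" for k
        unfolding tm_def L_def mono_pow_rs by simp
      then show ?thesis using Psi_hs'[OF boxe, where x="{}"] p1 unfolding \<psi>_def by simp
    qed
    have HR: "((\<lambda>k. complex_of_real (mono_pow Nc J k) * R k) has_sum 1) ?MI"
      by (rule has_sum_finite_neutralI[where B="{\<lambda>_. 0}"])
         (auto simp: R_def zero_in_multi_idx mono_pow_zero_idx)
    show ?thesis using has_sum_diffc[OF HL HR] by (simp add: right_diff_distrib)
  qed
  have LR: "L k' - R k' = 0" if "k' \<in> ?MI" for k'
    by (rule UL[OF eps _ that]) (use key in blast)
  have Cm: "C k' = 0" if k': "k' \<in> ?MI" "sup_in Nc {i} k'" "k' \<noteq> (\<lambda>_. 0)" for k'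
  proof -
    obtain c F where cF: "cmod c = 1" "\<forall>n\<in>F. \<exists>j<Nc. k' j \<noteq> 0 \<and> n \<in> flips (V j)"
      "?op k' = (\<lambda>x. if x = F then c else 0)" using op_pow_delta by blast
    have "F = {}"
    proof -
      have "n \<notin> F" for n
      proof
        assume "n \<in> F"
        then obtain j where j: "j < Nc" "k' j \<noteq> 0" "n \<in> flips (V j)" using cF(2) by blast
        then have "j = i" using k'(2) unfolding sup_in_def by blast
        then show False using j(3) fl by simp
      qed
      then show ?thesis by blast
    qed
    then have "complex_of_real (C k') * c = 0"
      using LR[OF k'(1)] k'(2,3) unfolding L_def R_def cF(3) by simp
    then show ?thesis using cF(1) by auto
  qed
  let ?SB = "{..<Nc} - {i}"
  have disj: "{i} \<inter> ?SB = {}" by auto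
  have hA: "\<forall>j\<in>{i}. \<forall>n. V j n \<noteq> PI \<longrightarrow> n \<in> {}" using Vi by simp
  have hB: "\<forall>j\<in>?SB. \<forall>n. V j n \<noteq> PI \<longrightarrow> n \<notin> {}" by simp
  have supk: "sup_in Nc ({i} \<union> ?SB) k" unfolding sup_in_def by auto
  have "C (\<lambda>j. rs {i} k j + rs ?SB k j) = C (rs {i} k) * C (rs ?SB k)"
    by (rule CL[OF disj hA hB rs_MI[OF k] rs_MI[OF k] sup_in_rs sup_in_rs])
  moreover have "(\<lambda>j. rs {i} k j + rs ?SB k j) = k" by (rule rs_recombine[OF disj k supk])
  moreover have "C (rs {i} k) = 0"
  proof (rule Cm[OF rs_MI[OF k] sup_in_rs])
    show "rs {i} k \<noteq> (\<lambda>_. 0)" using ki unfolding rs_def by (auto simp: fun_eq_iff)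
  qed
  ultimately show ?thesis by simp
qed

end

theorem lemma2:
  fixes Nq Nc :: nat
    and h :: "nat \<Rightarrow> real"
    and V :: "nat \<Rightarrow> nat \<Rightarrow> pauli"
    and C :: "(nat \<Rightarrow> nat) \<Rightarrow> real"
    and kA kB :: "nat \<Rightarrow> nat"
  assumes h_pos: "\<forall>n<Nq. h n > 0"
    and V_pauli: "\<forall>i<Nc. is_pauli_string Nq (V i)"
    and expansion: "\<exists>\<epsilon>>0. \<forall>J :: nat \<Rightarrow> real. (\<forall>i<Nc. \<bar>J i\<bar> < \<epsilon>) \<longrightarrow>
        (\<exists>\<psi>. (\<forall>x. ((\<lambda>k. complex_of_real (mono_pow Nc J k * C k) * op_pow V k Nc ket0 x)
                        has_sum \<psi> x) (multi_idx Nc))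
             \<and> is_phased_ground_state Nq (hamiltonian Nq h Nc V J) \<psi>)"
    and kA: "kA \<in> multi_idx Nc" and kB: "kB \<in> multi_idx Nc"
    and disj: "support Nc V kA \<inter> support Nc V kB = {}"
  shows "C (\<lambda>i. kA i + kB i) = C kA * C kB"
proof -
  obtain \<epsilon> where eps: "\<epsilon> > 0" and exps: "\<forall>J :: nat \<Rightarrow> real. (\<forall>i<Nc. \<bar>J i\<bar> < \<epsilon>) \<longrightarrow>
        (\<exists>\<psi>. (\<forall>x. ((\<lambda>k. complex_of_real (mono_pow Nc J k * C k) * op_pow V k Nc ket0 x)
                        has_sum \<psi> x) (multi_idx Nc))
             \<and> is_phased_ground_state Nq (hamiltonian Nq h Nc V J) \<psi>)"
    using expansion by blast
  note CL' = CL[OF h_pos V_pauli eps exps]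
  note IL' = IL[OF h_pos V_pauli eps exps]
  show ?thesis
  proof (cases "\<exists>i. kA i \<noteq> 0 \<and> kB i \<noteq> 0")
    case True
    then obtain i where i: "kA i \<noteq> 0" "kB i \<noteq> 0" by blast
    have iN: "i < Nc" using MI_lt[OF kA i(1)] .
    have Vi: "\<forall>n. V i n = PI"
    proof (rule ccontr)
      assume "\<not> (\<forall>n. V i n = PI)"
      then obtain n where "V i n \<noteq> PI" by blast
      then have "n \<in> support Nc V kA" "n \<in> support Nc V kB"
        unfolding support_def using iN i by blast+
      then show False using disj by blast
    qed
    have "C (\<lambda>i. kA i + kB i) = 0"
      by (rule IL'[OF iN Vi sum_MI[OF kA kB]]) (use i in simp)
    moreover have "C kA = 0" by (rule IL'[OF iN Vi kA i(1)])
    ultimately show ?thesis by simp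
  next
    case False
    let ?SA = "{i. kA i \<noteq> 0}" and ?SB = "{i. kB i \<noteq> 0}" and ?Q = "support Nc V kA"
    have dj: "?SA \<inter> ?SB = {}" using False by blast
    have hA: "\<forall>i\<in>?SA. \<forall>n. V i n \<noteq> PI \<longrightarrow> n \<in> ?Q"
    proof (intro ballI allI impI)
      fix i n assume i: "i \<in> ?SA" and n: "V i n \<noteq> PI"
      have "i < Nc" using MI_lt[OF kA] i by simp
      then show "n \<in> ?Q" unfolding support_def using i n by blast
    qed
    have hB: "\<forall>i\<in>?SB. \<forall>n. V i n \<noteq> PI \<longrightarrow> n \<notin> ?Q"
    proof (intro ballI allI impI)
      fix i n assume i: "i \<in> ?SB" and n: "V i n \<noteq> PI"
      have "i < Nc" using MI_lt[OF kB] i by simp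
      then have "n \<in> support Nc V kB" unfolding support_def using i n by blast
      then show "n \<notin> ?Q" using disj by blast
    qed
    show ?thesis
      by (rule CL'[OF dj hA hB kA kB]) (auto simp: sup_in_def)
  qed
qed

end
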